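(* Let $\mathbf{M}^*\in\mathbb{R}^{d_1\times d_2}$ have rank $r$, and let $f(\mathbf{U},\mathbf{V})=\frac12\|\mathbf{U}\mathbf{V}^\top-\mathbf{M}^*\|_F^2$ for $\mathbf{U}\in\mathbb{R}^{d_1\times r}$, $\mathbf{V}\in\mathbb{R}^{d_2\times r}$. Let $0<\epsilon<\|\mathbf{M}^*\|_F$ and $d=\max\{d_1,d_2\}$. Suppose the entries of $\mathbf{U}_0$ and $\mathbf{V}_0$ are drawn i.i.d. from $\mathcal{N}(0,\frac{\epsilon}{\mathrm{poly}(d)})$ (with a sufficiently large polynomial in $d$), and run gradient descent $$\mathbf{U}_{t+1}=\mathbf{U}_t-\eta_t(\mathbf{U}_t\mathbf{V}_t^\top-\mathbf{M}^* )\mathbf{V}_t,\qquad \mathbf{V}_{t+1}=\mathbf{V}_t-\eta_t(\mathbf{U}_t\mathbf{V}_t^\top-\mathbf{M}^* )^\top\mathbf{U}_t$$ with step sizes $\eta_t=\frac{\sqrt{\epsilon/r}}{100(t+1)\|\mathbf{M}^*\|_F^{3/2}}$, $t=0,1,\dots$. Then with high probability over the initialization $(\mathbf{U}_0,\mathbf{V}_0)$, for all $t$: (i) $\|\mathbf{U}_t^\top\mathbf{U}_t-\mathbf{V}_t^\top\mathbf{V}_t\|_F\le\epsilon$; (ii) $f(\mathbf{U}_t,\mathbf{V}_t)\le f(\mathbf{U}_{t-1},\mathbf{V}_{t-1})\le\cdots\le f(\mathbf{U}_0,\mathbf{V}_0)\le 2\|\mathbf{M}^*\|_F^2$; (iii)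 $\|\mathbf{U}_t\|_F^2\le 5\sqrt{r}\|\mathbf{M}^*\|_F$ and $\|\mathbf{V}_t\|_F^2\le 5\sqrt{r}\|\mathbf{M}^*\|_F$.
   Context: $\|\cdot\|_F$ is the Frobenius norm. *)

theory Defs
  imports "HOL-Probability.Probability" "Jordan_Normal_Form.DL_Rank"
begin

definition fro_norm :: "real mat \<Rightarrow> real" where
  "fro_norm A = sqrt (\<Sum>i<dim_row A. \<Sum>j<dim_col A. (A $$ (i, j))\<^sup>2)"

definition mf_obj :: "real mat \<Rightarrow> real mat \<Rightarrow> real mat \<Rightarrow> real" where
  "mf_obj M U V = (fro_norm (U * transpose_mat V - M))\<^sup>2 / 2"

definition mf_step :: "real mat \<Rightarrow> nat \<Rightarrow> real \<Rightarrow> nat \<Rightarrow> real" where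
  "mf_step M r \<epsilon> t = sqrt (\<epsilon> / real r) / (100 * real (t + 1) * fro_norm M powr (3/2))"

fun mf_gd :: "real mat \<Rightarrow> nat \<Rightarrow> real \<Rightarrow> real mat \<Rightarrow> real mat \<Rightarrow> nat \<Rightarrow> real mat \<times> real mat" where
  "mf_gd M r \<epsilon> U0 V0 0 = (U0, V0)"
| "mf_gd M r \<epsilon> U0 V0 (Suc t) =
     (let (U, V) = mf_gd M r \<epsilon> U0 V0 t; \<eta> = mf_step M r \<epsilon> t; R = U * transpose_mat V - M
      in (U - \<eta> \<cdot>\<^sub>m (R * V), V - \<eta> \<cdot>\<^sub>m (transpose_mat R * U)))"

text \<open>Initialization sample space: all entries of U0 (indices Inl (i,j), i<d1, j<r) and of
  V0 (indices Inr (i,j), i<d2, j<r), i.i.d. N(0, sigma^2) (sigma = standard deviation).\<close>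
definition init_index :: "nat \<Rightarrow> nat \<Rightarrow> nat \<Rightarrow> ((nat \<times> nat) + (nat \<times> nat)) set" where
  "init_index d1 d2 r = Inl ` ({..<d1} \<times> {..<r}) \<union> Inr ` ({..<d2} \<times> {..<r})"

definition gauss_init :: "nat \<Rightarrow> nat \<Rightarrow> nat \<Rightarrow> real \<Rightarrow> ((nat \<times> nat) + (nat \<times> nat) \<Rightarrow> real) measure" where
  "gauss_init d1 d2 r \<sigma> = PiM (init_index d1 d2 r) (\<lambda>_. density lborel (normal_density 0 \<sigma>))"

definition init_U :: "nat \<Rightarrow> nat \<Rightarrow> ((nat \<times> nat) + (nat \<times> nat) \<Rightarrow> real) \<Rightarrow> real mat" where
  "init_U d1 r \<omega> = mat d1 r (\<lambda>(i, j). \<omega> (Inl (i, j)))"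

definition init_V :: "nat \<Rightarrow> nat \<Rightarrow> ((nat \<times> nat) + (nat \<times> nat) \<Rightarrow> real) \<Rightarrow> real mat" where
  "init_V d2 r \<omega> = mat d2 r (\<lambda>(i, j). \<omega> (Inr (i, j)))"

end

theory Submission
  imports Defs
begin


lemma mult_entry: fixes A B :: "real mat"
  assumes "i < dim_row A" "j < dim_col B" "dim_col A = dim_row B"
  shows "(A * B) $$ (i,j) = (\<Sum>k<dim_row B. A $$ (i,k) * B $$ (k,j))"
  using assms by (auto simp: scalar_prod_def atLeast0LessThan intro!: sum.cong)

definition fip :: "real mat \<Rightarrow> real mat \<Rightarrow> real" where
  "fip A B = (\<Sum>i<dim_row A. \<Sum>j<dim_col A. A $$ (i,j) * B $$ (i,j))"

lemma fro_norm_L2: "fro_norm A = L2_set (\<lambda>(i,j). A $$ (i,j)) ({..<dim_row A} \<times> {..<dim_col A})"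
  unfolding fro_norm_def L2_set_def
  by (simp add: sum.cartesian_product case_prod_beta)

lemma fro_nonneg: "fro_norm A \<ge> 0"
  unfolding fro_norm_def by (auto intro!: sum_nonneg)

lemma fro_sq: "(fro_norm A)\<^sup>2 = fip A A"
  unfolding fro_norm_def fip_def by (simp add: sum_nonneg power2_eq_square)

lemma fip_sym: "B \<in> carrier_mat (dim_row A) (dim_col A) \<Longrightarrow> fip A B = fip B A"
  unfolding fip_def by (auto simp: mult.commute)

lemma fip_cs: assumes "B \<in> carrier_mat (dim_row A) (dim_col A)"
  shows "fip A B \<le> fro_norm A * fro_norm B"
proof -
  let ?S = "{..<dim_row A} \<times> {..<dim_col A}"
  have "fip A B = (\<Sum>x\<in>?S. A $$ x * B $$ x)"
    unfolding fip_def by (simp add: sum.cartesian_product case_prod_beta)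
  also have "\<dots> \<le> (\<Sum>x\<in>?S. \<bar>A $$ x\<bar> * \<bar>B $$ x\<bar>)"
    by (intro sum_mono) (metis abs_ge_self abs_mult)
  also have "\<dots> \<le> L2_set (\<lambda>x. A $$ x) ?S * L2_set (\<lambda>x. B $$ x) ?S"
    by (rule L2_set_mult_ineq)
  also have "\<dots> = fro_norm A * fro_norm B"
    using assms by (simp add: fro_norm_L2 case_prod_beta)
  finally show ?thesis .
qed

lemma fro_add: assumes "B \<in> carrier_mat (dim_row A) (dim_col A)"
  shows "fro_norm (A + B) \<le> fro_norm A + fro_norm B"
proof -
  let ?S = "{..<dim_row A} \<times> {..<dim_col A}"
  have "fro_norm (A + B) = L2_set (\<lambda>x. A $$ x + B $$ x) ?S"
    using assms by (auto simp: fro_norm_L2 case_prod_beta intro!: L2_set_cong)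
  also have "\<dots> \<le> L2_set (\<lambda>x. A $$ x) ?S + L2_set (\<lambda>x. B $$ x) ?S"
    by (rule L2_set_triangle_ineq)
  also have "\<dots> = fro_norm A + fro_norm B"
    using assms by (simp add: fro_norm_L2 case_prod_beta)
  finally show ?thesis .
qed

lemma fro_smult: "fro_norm (c \<cdot>\<^sub>m A) = \<bar>c\<bar> * fro_norm A"
  unfolding fro_norm_def
  by (simp add: power_mult_distrib sum_distrib_left[symmetric] real_sqrt_mult)

lemma fro_uminus: "fro_norm (- A) = fro_norm A"
  unfolding fro_norm_def by simp

lemma fro_minus: assumes "B \<in> carrier_mat (dim_row A) (dim_col A)"
  shows "fro_norm (A - B) \<le> fro_norm A + fro_norm B"
proof -
  have "A - B = A + (- B)" using assms by (auto intro!: eq_matI)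
  then show ?thesis using fro_add[of "- B" A] assms by (simp add: fro_uminus)
qed

lemma fro_transpose: "fro_norm (transpose_mat A) = fro_norm A"
  unfolding fro_norm_def by (simp, subst sum.swap, simp)

lemma cs_sum: "(\<Sum>k\<in>K. f k * g k)\<^sup>2 \<le> (\<Sum>k\<in>K. (f k)\<^sup>2) * (\<Sum>k\<in>K. (g k :: real)\<^sup>2)"
  by (rule Cauchy_Schwarz_ineq_sum)

lemma fro_mult: assumes "dim_col A = dim_row B"
  shows "fro_norm (A * B) \<le> fro_norm A * fro_norm B"
proof -
  have "(fro_norm (A * B))\<^sup>2 = (\<Sum>i<dim_row A. \<Sum>j<dim_col B. (\<Sum>k<dim_row B. A $$ (i,k) * B $$ (k,j))\<^sup>2)"
    unfolding fro_norm_def using assms by (simp add: sum_nonneg mult_entry del: index_mult_mat(1))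
  also have "\<dots> \<le> (\<Sum>i<dim_row A. \<Sum>j<dim_col B. (\<Sum>k<dim_row B. (A $$ (i,k))\<^sup>2) * (\<Sum>k<dim_row B. (B $$ (k,j))\<^sup>2))"
    by (intro sum_mono cs_sum)
  also have "\<dots> = (\<Sum>i<dim_row A. \<Sum>k<dim_col A. (A $$ (i,k))\<^sup>2) * (\<Sum>j<dim_col B. \<Sum>k<dim_row B. (B $$ (k,j))\<^sup>2)"
    unfolding sum_product assms by (rule refl)
  also have "\<dots> = (fro_norm A * fro_norm B)\<^sup>2"
    unfolding fro_norm_def power_mult_distrib
    by (simp add: sum_nonneg, subst (2) sum.swap, simp)
  finally show ?thesis
    by (meson fro_nonneg mult_nonneg_nonneg power2_le_imp_le)
qed

lemma fip_add_right: "B \<in> carrier_mat (dim_row A) (dim_col A) \<Longrightarrow> C \<in> carrier_mat (dim_row A) (dim_col A) \<Longrightarrow>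
  fip A (B + C) = fip A B + fip A C"
  unfolding fip_def by (simp add: distrib_left sum.distrib)

lemma fip_smult_right: "B \<in> carrier_mat (dim_row A) (dim_col A) \<Longrightarrow> fip A (c \<cdot>\<^sub>m B) = c * fip A B"
  unfolding fip_def by (simp add: sum_distrib_left mult_ac)

lemma fro_sq_add: assumes "B \<in> carrier_mat (dim_row A) (dim_col A)"
  shows "(fro_norm (A + B))\<^sup>2 = (fro_norm A)\<^sup>2 + 2 * fip A B + (fro_norm B)\<^sup>2"
  using assms unfolding fro_sq fip_def
  by (simp add: power2_eq_square algebra_simps sum.distrib sum_distrib_left)

lemma fip_mult1: fixes A B C :: "real mat" assumes "A \<in> carrier_mat n m" "B \<in> carrier_mat n k" "C \<in> carrier_mat k m"
  shows "fip A (B * C) = fip (transpose_mat B * A) C"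
proof -
  have "fip A (B * C) = (\<Sum>i<n. \<Sum>j<m. \<Sum>l<k. A $$ (i,j) * B $$ (i,l) * C $$ (l,j))"
    using assms unfolding fip_def by (simp add: mult_entry sum_distrib_left mult_ac del: index_mult_mat(1))
  also have "\<dots> = (\<Sum>l<k. \<Sum>j<m. \<Sum>i<n. A $$ (i,j) * B $$ (i,l) * C $$ (l,j))"
    by (subst sum.swap, subst (2) sum.swap, simp add: sum.swap[of _ "{..<m}"])
  also have "\<dots> = fip (transpose_mat B * A) C"
    using assms unfolding fip_def by (simp add: mult_entry sum_distrib_left mult_ac del: index_mult_mat(1))
  finally show ?thesis .
qed

lemma fip_mult2: fixes A B C :: "real mat" assumes "A \<in> carrier_mat n m" "B \<in> carrier_mat n k" "C \<in> carrier_mat k m"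
  shows "fip A (B * C) = fip (A * transpose_mat C) B"
proof -
  have "fip A (B * C) = (\<Sum>i<n. \<Sum>j<m. \<Sum>l<k. A $$ (i,j) * B $$ (i,l) * C $$ (l,j))"
    using assms unfolding fip_def by (simp add: mult_entry sum_distrib_left mult_ac del: index_mult_mat(1))
  also have "\<dots> = (\<Sum>i<n. \<Sum>l<k. \<Sum>j<m. A $$ (i,j) * B $$ (i,l) * C $$ (l,j))"
    by (simp add: sum.swap[of _ "{..<m}"])
  also have "\<dots> = fip (A * transpose_mat C) B"
    using assms unfolding fip_def by (simp add: mult_entry sum_distrib_left mult_ac del: index_mult_mat(1))
  finally show ?thesis .
qed

lemma multT_entry: fixes A B :: "real mat" assumes "A \<in> carrier_mat n k" "B \<in> carrier_mat n m" "i < k" "j < m"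
  shows "(transpose_mat A * B) $$ (i,j) = (\<Sum>l<n. A $$ (l,i) * B $$ (l,j))"
  using assms by (subst mult_entry) auto

lemma multT2_entry: fixes A B :: "real mat" assumes "A \<in> carrier_mat n k" "B \<in> carrier_mat m k" "i < n" "j < m"
  shows "(A * transpose_mat B) $$ (i,j) = (\<Sum>l<k. A $$ (i,l) * B $$ (j,l))"
  using assms by (subst mult_entry) auto

lemma sum_expand: "(\<Sum>l\<in>L. (a l - e * b l) * (c l - e * d l)) =
   (\<Sum>l\<in>L. a l * c l) - e * (\<Sum>l\<in>L. b l * c l) - e * (\<Sum>l\<in>L. a l * d l) + e\<^sup>2 * (\<Sum>l\<in>L. b l * (d l::real))"
  by (simp add: algebra_simps sum_subtractf sum.distrib sum_distrib_left power2_eq_square)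

lemma expand_R: fixes U V P Q M :: "real mat"
  assumes "U \<in> carrier_mat n k" "V \<in> carrier_mat m k" "P \<in> carrier_mat n k" "Q \<in> carrier_mat m k"
    "M \<in> carrier_mat n m"
  shows "(U - \<eta> \<cdot>\<^sub>m P) * transpose_mat (V - \<eta> \<cdot>\<^sub>m Q) - M
     = ((U * transpose_mat V - M) - \<eta> \<cdot>\<^sub>m (P * transpose_mat V + U * transpose_mat Q)) + (\<eta>\<^sup>2) \<cdot>\<^sub>m (P * transpose_mat Q)"
proof -
  have c1: "U - \<eta> \<cdot>\<^sub>m P \<in> carrier_mat n k" "V - \<eta> \<cdot>\<^sub>m Q \<in> carrier_mat m k" using assms by auto
  show ?thesis using assms
  apply (intro eq_matI) apply (auto simp: multT2_entry[OF c1] multT2_entry[of _ n k _ m] sum_subtractf sum.distrib sum_distrib_left algebra_simps power2_eq_square simp del: index_mult_mat(1))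
  done
qed

lemma expand_D: fixes U V P Q :: "real mat"
  assumes "U \<in> carrier_mat n k" "V \<in> carrier_mat m k" "P \<in> carrier_mat n k" "Q \<in> carrier_mat m k"
    and h1: "transpose_mat P * U = transpose_mat V * Q" and h2: "transpose_mat U * P = transpose_mat Q * V"
  shows "transpose_mat (U - \<eta> \<cdot>\<^sub>m P) * (U - \<eta> \<cdot>\<^sub>m P) - transpose_mat (V - \<eta> \<cdot>\<^sub>m Q) * (V - \<eta> \<cdot>\<^sub>m Q)
     = (transpose_mat U * U - transpose_mat V * V) + (\<eta>\<^sup>2) \<cdot>\<^sub>m (transpose_mat P * P - transpose_mat Q * Q)"
proof (rule eq_matI)
  fix i j assume ij: "i < dim_row (transpose_mat U * U - transpose_mat V * V + \<eta>\<^sup>2 \<cdot>\<^sub>m (transpose_mat P * P - transpose_mat Q * Q))"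
     "j < dim_col (transpose_mat U * U - transpose_mat V * V + \<eta>\<^sup>2 \<cdot>\<^sub>m (transpose_mat P * P - transpose_mat Q * Q))"
  then have ij': "i < k" "j < k" using assms by auto
  have e1: "(\<Sum>l<n. P $$ (l,i) * U $$ (l,j)) = (\<Sum>l<m. V $$ (l,i) * Q $$ (l,j))"
    using arg_cong[OF h1, of "\<lambda>X. X $$ (i,j)"] assms(1-4) ij' by (simp only: multT_entry[of _ n k _ k] multT_entry[of _ m k _ k])
  have e2: "(\<Sum>l<n. U $$ (l,i) * P $$ (l,j)) = (\<Sum>l<m. Q $$ (l,i) * V $$ (l,j))"
    using arg_cong[OF h2, of "\<lambda>X. X $$ (i,j)"] assms(1-4) ij' by (simp only: multT_entry[of _ n k _ k] multT_entry[of _ m k _ k])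
  have c1: "U - \<eta> \<cdot>\<^sub>m P \<in> carrier_mat n k" "V - \<eta> \<cdot>\<^sub>m Q \<in> carrier_mat m k" using assms by auto
  have e3: "(\<Sum>l<n. \<eta>*(P $$ (l,i)*U $$ (l,j))) = (\<Sum>l<m. \<eta>*(Q $$ (l,j)*V $$ (l,i)))"
    using e1 by (simp add: sum_distrib_left[symmetric] mult.commute)
  have e4: "(\<Sum>l<n. \<eta>*(P $$ (l,j)*U $$ (l,i))) = (\<Sum>l<m. \<eta>*(Q $$ (l,i)*V $$ (l,j)))"
    using e2 by (simp add: sum_distrib_left[symmetric] mult.commute)
  show "(transpose_mat (U - \<eta> \<cdot>\<^sub>m P) * (U - \<eta> \<cdot>\<^sub>m P) - transpose_mat (V - \<eta> \<cdot>\<^sub>m Q) * (V - \<eta> \<cdot>\<^sub>m Q)) $$ (i, j) =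
         (transpose_mat U * U - transpose_mat V * V + \<eta>\<^sup>2 \<cdot>\<^sub>m (transpose_mat P * P - transpose_mat Q * Q)) $$ (i, j)"
    using assms ij' 
    apply (simp add: multT_entry[OF c1(1) c1(1)] multT_entry[OF c1(2) c1(2)] multT_entry[of _ n k _ k] multT_entry[of _ m k _ k] sum_subtractf sum.distrib sum_distrib_left algebra_simps power2_eq_square del: index_mult_mat(1))
    using e3 e4 by linarith
qed (use assms in auto)


lemma fro_sq_minus_smult: assumes "B \<in> carrier_mat (dim_row A) (dim_col A)"
  shows "(fro_norm (A - c \<cdot>\<^sub>m B))\<^sup>2 = (fro_norm A)\<^sup>2 - 2 * c * fip A B + c\<^sup>2 * (fro_norm B)\<^sup>2"
  using assms unfolding fro_sq fip_def
  by (simp add: power2_eq_square algebra_simps sum_subtractf sum.distrib sum_distrib_left)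

lemma fro_sq_add_smult: assumes "B \<in> carrier_mat (dim_row A) (dim_col A)"
  shows "(fro_norm (A + c \<cdot>\<^sub>m B))\<^sup>2 = (fro_norm A)\<^sup>2 + 2 * c * fip A B + c\<^sup>2 * (fro_norm B)\<^sup>2"
  using assms unfolding fro_sq fip_def
  by (simp add: power2_eq_square algebra_simps sum_subtractf sum.distrib sum_distrib_left)

lemma fro_minus_comm: assumes "B \<in> carrier_mat (dim_row A) (dim_col A)"
  shows "fro_norm (A - B) = fro_norm (B - A)"
  using assms unfolding fro_norm_def by (simp add: power2_commute)

lemma arith_descent:
  fixes \<eta> g S \<rho> x y F Yn :: real
  assumes "\<eta> \<ge> 0" "g \<ge> 0" "S \<ge> 0" "\<rho> \<ge> 0" "x \<ge> 0" "y \<ge> 0" "Yn \<ge> 0"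
    and hS: "\<eta> * S \<le> 1/10" and hr: "\<eta> * \<rho> \<le> 1/50"
    and hx2: "x\<^sup>2 \<le> g * S" and hx: "x \<le> \<rho> * S" and hy1: "2 * y \<le> g" and hy2: "2 * y \<le> \<rho>\<^sup>2 * S"
    and hF: "F \<le> (\<rho> + \<eta> * x) * y" and hY: "Yn \<le> y"
  shows "- 2 * \<eta> * g + \<eta>\<^sup>2 * x\<^sup>2 + 2 * \<eta>\<^sup>2 * F + (\<eta>\<^sup>2)\<^sup>2 * Yn\<^sup>2 \<le> 0"
proof -
  have t1: "\<eta>\<^sup>2 * x\<^sup>2 \<le> (\<eta> * g) * (\<eta> * S)"
    using mult_left_mono[OF hx2, of "\<eta>\<^sup>2"] by (simp add: power2_eq_square algebra_simps)
  have t1': "(\<eta> * g) * (\<eta> * S) \<le> (\<eta> * g) * (1/10)"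
    using mult_left_mono[OF hS, of "\<eta> * g"] assms by simp
  have "2 * \<eta>\<^sup>2 * F \<le> 2 * \<eta>\<^sup>2 * ((\<rho> + \<eta> * x) * y)"
    using mult_left_mono[OF hF, of "2 * \<eta>\<^sup>2"] by simp
  also have "\<dots> = \<eta>\<^sup>2 * \<rho> * (2*y) + \<eta>^3 * x * (2*y)" by (simp add: algebra_simps power2_eq_square power3_eq_cube)
  also have "\<dots> \<le> \<eta>\<^sup>2 * \<rho> * g + \<eta>^3 * (\<rho> * S) * g"
  proof (rule add_mono)
    show "\<eta>\<^sup>2 * \<rho> * (2 * y) \<le> \<eta>\<^sup>2 * \<rho> * g" using hy1 assms by (intro mult_left_mono) auto
    show "\<eta>^3 * x * (2 * y) \<le> \<eta>^3 * (\<rho> * S) * g" using hy1 hx assms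
      by (intro mult_mono mult_left_mono) auto
  qed
  also have "\<dots> = (\<eta> * g) * (\<eta> * \<rho>) + (\<eta> * g) * ((\<eta> * \<rho>) * (\<eta> * S))"
    by (simp add: algebra_simps power2_eq_square power3_eq_cube)
  also have "\<dots> \<le> (\<eta> * g) * (1/50) + (\<eta> * g) * ((1/50) * (1/10))"
    using assms by (intro add_mono mult_left_mono mult_mono) auto
  finally have t2: "2 * \<eta>\<^sup>2 * F \<le> (\<eta> * g) * (1/50) + (\<eta> * g) * ((1/50) * (1/10))" .
  have "(\<eta>\<^sup>2)\<^sup>2 * Yn\<^sup>2 \<le> (\<eta>\<^sup>2)\<^sup>2 * (y * y)"
    using assms by (intro mult_left_mono) (auto simp: power2_eq_square intro: mult_mono)
  also have "\<dots> \<le> (\<eta>\<^sup>2)\<^sup>2 * ((g/2) * (\<rho>\<^sup>2 * S / 2))"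
    using assms by (intro mult_left_mono mult_mono) auto
  also have "\<dots> = (\<eta> * g) * ((\<eta> * \<rho>)\<^sup>2 * (\<eta> * S)) / 4"
    by (simp add: algebra_simps power2_eq_square)
  also have "\<dots> \<le> (\<eta> * g) * ((1/50)\<^sup>2 * (1/10)) / 4"
    using assms by (intro divide_right_mono mult_left_mono mult_mono power_mono) auto
  finally have t3: "(\<eta>\<^sup>2)\<^sup>2 * Yn\<^sup>2 \<le> (\<eta> * g) * ((1/50)\<^sup>2 * (1/10)) / 4" .
  have "0 \<le> \<eta> * g" using assms by simp
  then show ?thesis using t1 t1' t2 t3 by (simp add: power2_eq_square)
qed

lemma step_R:
  fixes U V M :: "real mat"
  assumes U: "U \<in> carrier_mat d1 r" and V: "V \<in> carrier_mat d2 r" and M: "M \<in> carrier_mat d1 d2"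
    and eta: "\<eta> \<ge> 0"
    and hS: "\<eta> * ((fro_norm U)\<^sup>2 + (fro_norm V)\<^sup>2) \<le> 1/10"
    and hr: "\<eta> * fro_norm (U * transpose_mat V - M) \<le> 1/50"
  shows "(fro_norm ((U - \<eta> \<cdot>\<^sub>m ((U * transpose_mat V - M) * V))
            * transpose_mat (V - \<eta> \<cdot>\<^sub>m (transpose_mat (U * transpose_mat V - M) * U)) - M))\<^sup>2
         \<le> (fro_norm (U * transpose_mat V - M))\<^sup>2"
proof -
  define R where "R = U * transpose_mat V - M"
  define P where "P = R * V"
  define Q where "Q = transpose_mat R * U"
  define X where "X = P * transpose_mat V + U * transpose_mat Q"
  define Y where "Y = P * transpose_mat Q"
  have R: "R \<in> carrier_mat d1 d2" unfolding R_def using U V M by auto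
  have P: "P \<in> carrier_mat d1 r" unfolding P_def using R V by auto
  have Q: "Q \<in> carrier_mat d2 r" unfolding Q_def using R U by auto
  have X: "X \<in> carrier_mat d1 d2" unfolding X_def using P Q U V by auto
  have Y: "Y \<in> carrier_mat d1 d2" unfolding Y_def using P Q by auto
  have QT: "transpose_mat Q = transpose_mat U * R"
    unfolding Q_def using R U by (simp add: transpose_mult[of _ d2 d1 _ r])
  have eq: "(U - \<eta> \<cdot>\<^sub>m P) * transpose_mat (V - \<eta> \<cdot>\<^sub>m Q) - M = (R - \<eta> \<cdot>\<^sub>m X) + (\<eta>\<^sup>2) \<cdot>\<^sub>m Y"
    unfolding X_def Y_def R_def by (rule expand_R[OF U V P Q M])
  let ?u = "fro_norm U" and ?v = "fro_norm V" and ?a = "fro_norm P" and ?b = "fro_norm Q"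
    and ?\<rho> = "fro_norm R"
  have f1: "fip R X = fip R (P * transpose_mat V) + fip R (U * transpose_mat Q)"
    unfolding X_def using R P Q U V by (subst fip_add_right) auto
  have f2: "fip R (P * transpose_mat V) = fip P P"
    using fip_mult2[OF R P, of "transpose_mat V"] V by (simp add: P_def)
  have f3: "fip R (U * transpose_mat Q) = fip (transpose_mat Q) (transpose_mat Q)"
    using fip_mult1[OF R U, of "transpose_mat Q"] Q QT R U by simp
  have fRX: "fip R X = ?a\<^sup>2 + ?b\<^sup>2"
    using f1 f2 f3 by (simp add: fro_sq[symmetric] fro_transpose)
  have a_le: "?a \<le> ?\<rho> * ?v" unfolding P_def using fro_mult[of R V] R V by simp
  have b_le: "?b \<le> ?\<rho> * ?u" unfolding Q_def using fro_mult[of "transpose_mat R" U] R U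
    by (simp add: fro_transpose)
  have x_le: "fro_norm X \<le> ?a * ?v + ?u * ?b"
  proof -
    have "fro_norm X \<le> fro_norm (P * transpose_mat V) + fro_norm (U * transpose_mat Q)"
      unfolding X_def using fro_add[of "U * transpose_mat Q" "P * transpose_mat V"] P Q U V by auto
    also have "\<dots> \<le> ?a * ?v + ?u * ?b"
      using fro_mult[of P "transpose_mat V"] fro_mult[of U "transpose_mat Q"] P Q U V
      by (intro add_mono) (auto simp: fro_transpose)
    finally show ?thesis .
  qed
  have y_le: "fro_norm Y \<le> ?a * ?b"
    unfolding Y_def using fro_mult[of P "transpose_mat Q"] P Q by (simp add: fro_transpose)
  have nn: "?u \<ge> 0" "?v \<ge> 0" "?a \<ge> 0" "?b \<ge> 0" "?\<rho> \<ge> 0" "fro_norm X \<ge> 0" "fro_norm Y \<ge> 0"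
    by (simp_all add: fro_nonneg)
  have hx2: "(fro_norm X)\<^sup>2 \<le> (?a\<^sup>2 + ?b\<^sup>2) * (?u\<^sup>2 + ?v\<^sup>2)"
  proof -
    have "(fro_norm X)\<^sup>2 \<le> (?a * ?v + ?u * ?b)\<^sup>2" using x_le nn by (intro power_mono) auto
    also have "\<dots> \<le> (?a\<^sup>2 + ?b\<^sup>2) * (?u\<^sup>2 + ?v\<^sup>2)"
    proof -
      have "(?a\<^sup>2 + ?b\<^sup>2) * (?u\<^sup>2 + ?v\<^sup>2) - (?a * ?v + ?u * ?b)\<^sup>2 = (?a * ?u - ?b * ?v)\<^sup>2"
        by (simp add: power2_eq_square algebra_simps)
      moreover have "0 \<le> (?a * ?u - ?b * ?v)\<^sup>2" by simp
      ultimately show ?thesis by linarith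
    qed
    finally show ?thesis .
  qed
  have hx: "fro_norm X \<le> ?\<rho> * (?u\<^sup>2 + ?v\<^sup>2)"
  proof -
    have "?a * ?v + ?u * ?b \<le> (?\<rho> * ?v) * ?v + ?u * (?\<rho> * ?u)"
      using a_le b_le nn by (intro add_mono mult_right_mono mult_left_mono) auto
    moreover have "(?\<rho> * ?v) * ?v + ?u * (?\<rho> * ?u) = ?\<rho> * (?u\<^sup>2 + ?v\<^sup>2)"
      by (simp add: power2_eq_square algebra_simps)
    ultimately show ?thesis using x_le by linarith
  qed
  have hy1: "2 * (?a * ?b) \<le> ?a\<^sup>2 + ?b\<^sup>2"
  proof -
    have "?a\<^sup>2 + ?b\<^sup>2 - 2 * (?a * ?b) = (?a - ?b)\<^sup>2" by (simp add: power2_eq_square algebra_simps)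
    moreover have "0 \<le> (?a - ?b)\<^sup>2" by simp
    ultimately show ?thesis by linarith
  qed
  have hy2: "2 * (?a * ?b) \<le> ?\<rho>\<^sup>2 * (?u\<^sup>2 + ?v\<^sup>2)"
  proof -
    have "?a * ?b \<le> (?\<rho> * ?v) * (?\<rho> * ?u)" using a_le b_le nn by (intro mult_mono) auto
    moreover have "2 * (?v * ?u) \<le> ?u\<^sup>2 + ?v\<^sup>2"
    proof -
      have "?u\<^sup>2 + ?v\<^sup>2 - 2 * (?v * ?u) = (?u - ?v)\<^sup>2" by (simp add: power2_eq_square algebra_simps)
      moreover have "0 \<le> (?u - ?v)\<^sup>2" by simp
      ultimately show ?thesis by linarith
    qed
    then have "?\<rho>\<^sup>2 * (2 * (?v * ?u)) \<le> ?\<rho>\<^sup>2 * (?u\<^sup>2 + ?v\<^sup>2)"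
      by (intro mult_left_mono) auto
    moreover have "(?\<rho> * ?v) * (?\<rho> * ?u) = ?\<rho>\<^sup>2 * (?v * ?u)" by (simp add: power2_eq_square)
    ultimately show ?thesis by linarith
  qed
  have RX: "R - \<eta> \<cdot>\<^sub>m X \<in> carrier_mat d1 d2" using R X by auto
  have hF: "fip (R - \<eta> \<cdot>\<^sub>m X) Y \<le> (?\<rho> + \<eta> * fro_norm X) * (?a * ?b)"
  proof -
    have "fip (R - \<eta> \<cdot>\<^sub>m X) Y \<le> fro_norm (R - \<eta> \<cdot>\<^sub>m X) * fro_norm Y"
      using RX X Y by (intro fip_cs) auto
    also have "\<dots> \<le> (?\<rho> + \<eta> * fro_norm X) * (?a * ?b)"
    proof (rule mult_mono)
      show "fro_norm (R - \<eta> \<cdot>\<^sub>m X) \<le> ?\<rho> + \<eta> * fro_norm X"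
      proof -
        have "fro_norm (R - \<eta> \<cdot>\<^sub>m X) \<le> ?\<rho> + fro_norm (\<eta> \<cdot>\<^sub>m X)"
          by (rule fro_minus) (use R X in auto)
        then show ?thesis using eta by (simp add: fro_smult)
      qed
    qed (use y_le nn eta in auto)
    finally show ?thesis .
  qed
  have hr': "\<eta> * ?\<rho> \<le> 1/50" using hr by (simp add: R_def)
  have g0: "?a\<^sup>2 + ?b\<^sup>2 \<ge> 0" and S0: "?u\<^sup>2 + ?v\<^sup>2 \<ge> 0" and y0: "?a * ?b \<ge> 0" using nn by auto
  have main: "- 2 * \<eta> * (?a\<^sup>2 + ?b\<^sup>2) + \<eta>\<^sup>2 * (fro_norm X)\<^sup>2 + 2 * \<eta>\<^sup>2 * fip (R - \<eta> \<cdot>\<^sub>m X) Y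
      + (\<eta>\<^sup>2)\<^sup>2 * (fro_norm Y)\<^sup>2 \<le> 0"
    by (rule arith_descent[OF eta g0 S0 nn(5) nn(6) y0 nn(7) hS hr' hx2 hx hy1 hy2 hF y_le])
  have e1: "(fro_norm ((R - \<eta> \<cdot>\<^sub>m X) + (\<eta>\<^sup>2) \<cdot>\<^sub>m Y))\<^sup>2
      = (fro_norm (R - \<eta> \<cdot>\<^sub>m X))\<^sup>2 + 2 * \<eta>\<^sup>2 * fip (R - \<eta> \<cdot>\<^sub>m X) Y + (\<eta>\<^sup>2)\<^sup>2 * (fro_norm Y)\<^sup>2"
    using RX X Y by (subst fro_sq_add_smult) auto
  have e2: "(fro_norm (R - \<eta> \<cdot>\<^sub>m X))\<^sup>2 = ?\<rho>\<^sup>2 - 2 * \<eta> * fip R X + \<eta>\<^sup>2 * (fro_norm X)\<^sup>2"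
    using R X by (subst fro_sq_minus_smult) auto
  have "(fro_norm ((R - \<eta> \<cdot>\<^sub>m X) + (\<eta>\<^sup>2) \<cdot>\<^sub>m Y))\<^sup>2 \<le> ?\<rho>\<^sup>2"
  proof -
    have "2 * \<eta> * fip R X = 2 * \<eta> * (?a\<^sup>2 + ?b\<^sup>2)" using fRX by simp
    then show ?thesis using main e1 e2 by linarith
  qed
  then show ?thesis using eq unfolding P_def Q_def R_def by simp
qed


lemma step_D:
  fixes U V M :: "real mat"
  assumes U: "U \<in> carrier_mat d1 r" and V: "V \<in> carrier_mat d2 r" and M: "M \<in> carrier_mat d1 d2"
  shows "fro_norm (transpose_mat (U - \<eta> \<cdot>\<^sub>m ((U * transpose_mat V - M) * V)) * (U - \<eta> \<cdot>\<^sub>m ((U * transpose_mat V - M) * V))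
           - transpose_mat (V - \<eta> \<cdot>\<^sub>m (transpose_mat (U * transpose_mat V - M) * U)) * (V - \<eta> \<cdot>\<^sub>m (transpose_mat (U * transpose_mat V - M) * U)))
         \<le> fro_norm (transpose_mat U * U - transpose_mat V * V)
            + \<eta>\<^sup>2 * ((fro_norm (U * transpose_mat V - M))\<^sup>2 * ((fro_norm U)\<^sup>2 + (fro_norm V)\<^sup>2))"
proof -
  define R where "R = U * transpose_mat V - M"
  define P where "P = R * V"
  define Q where "Q = transpose_mat R * U"
  have R: "R \<in> carrier_mat d1 d2" unfolding R_def using U V M by auto
  have P: "P \<in> carrier_mat d1 r" unfolding P_def using R V by auto
  have Q: "Q \<in> carrier_mat d2 r" unfolding Q_def using R U by auto
  have QT: "transpose_mat Q = transpose_mat U * R"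
    unfolding Q_def using R U by (simp add: transpose_mult[of _ d2 d1 _ r])
  have PT: "transpose_mat P = transpose_mat V * transpose_mat R"
    unfolding P_def using R V by (simp add: transpose_mult[of _ d1 d2 _ r])
  have h1: "transpose_mat P * U = transpose_mat V * Q"
    unfolding PT Q_def using R U V by (subst assoc_mult_mat[of _ r d2 _ d1 _ r]) auto
  have h2: "transpose_mat U * P = transpose_mat Q * V"
    unfolding QT P_def using R U V by (subst assoc_mult_mat[of _ r d1 _ d2 _ r]) auto
  have eq: "transpose_mat (U - \<eta> \<cdot>\<^sub>m P) * (U - \<eta> \<cdot>\<^sub>m P) - transpose_mat (V - \<eta> \<cdot>\<^sub>m Q) * (V - \<eta> \<cdot>\<^sub>m Q)
     = (transpose_mat U * U - transpose_mat V * V) + (\<eta>\<^sup>2) \<cdot>\<^sub>m (transpose_mat P * P - transpose_mat Q * Q)"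
    by (rule expand_D[OF U V P Q h1 h2])
  have c1: "transpose_mat U * U - transpose_mat V * V \<in> carrier_mat r r" using U V by auto
  have c2: "transpose_mat P * P - transpose_mat Q * Q \<in> carrier_mat r r" using P Q by auto
  have "fro_norm ((transpose_mat U * U - transpose_mat V * V) + (\<eta>\<^sup>2) \<cdot>\<^sub>m (transpose_mat P * P - transpose_mat Q * Q))
     \<le> fro_norm (transpose_mat U * U - transpose_mat V * V) + fro_norm ((\<eta>\<^sup>2) \<cdot>\<^sub>m (transpose_mat P * P - transpose_mat Q * Q))"
    by (rule fro_add) (use c1 c2 in auto)
  also have "fro_norm ((\<eta>\<^sup>2) \<cdot>\<^sub>m (transpose_mat P * P - transpose_mat Q * Q)) = \<eta>\<^sup>2 * fro_norm (transpose_mat P * P - transpose_mat Q * Q)"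
    by (simp add: fro_smult)
  finally have s1: "fro_norm ((transpose_mat U * U - transpose_mat V * V) + (\<eta>\<^sup>2) \<cdot>\<^sub>m (transpose_mat P * P - transpose_mat Q * Q))
     \<le> fro_norm (transpose_mat U * U - transpose_mat V * V) + \<eta>\<^sup>2 * fro_norm (transpose_mat P * P - transpose_mat Q * Q)" .
  have s2: "fro_norm (transpose_mat P * P - transpose_mat Q * Q) \<le> (fro_norm P)\<^sup>2 + (fro_norm Q)\<^sup>2"
  proof -
    have "fro_norm (transpose_mat P * P - transpose_mat Q * Q) \<le> fro_norm (transpose_mat P * P) + fro_norm (transpose_mat Q * Q)"
      by (rule fro_minus) (use P Q in auto)
    also have "\<dots> \<le> (fro_norm P)\<^sup>2 + (fro_norm Q)\<^sup>2"
      using fro_mult[of "transpose_mat P" P] fro_mult[of "transpose_mat Q" Q] P Q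
      by (intro add_mono) (auto simp: fro_transpose power2_eq_square)
    finally show ?thesis .
  qed
  have s3: "(fro_norm P)\<^sup>2 + (fro_norm Q)\<^sup>2 \<le> (fro_norm R)\<^sup>2 * ((fro_norm U)\<^sup>2 + (fro_norm V)\<^sup>2)"
  proof -
    have "fro_norm P \<le> fro_norm R * fro_norm V" unfolding P_def using fro_mult[of R V] R V by simp
    then have a: "(fro_norm P)\<^sup>2 \<le> (fro_norm R)\<^sup>2 * (fro_norm V)\<^sup>2"
      by (metis fro_nonneg power_mono power_mult_distrib)
    have "fro_norm Q \<le> fro_norm R * fro_norm U" unfolding Q_def using fro_mult[of "transpose_mat R" U] R U
      by (simp add: fro_transpose)
    then have b: "(fro_norm Q)\<^sup>2 \<le> (fro_norm R)\<^sup>2 * (fro_norm U)\<^sup>2"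
      by (metis fro_nonneg power_mono power_mult_distrib)
    show ?thesis using a b by (simp add: algebra_simps)
  qed
  have "\<eta>\<^sup>2 * fro_norm (transpose_mat P * P - transpose_mat Q * Q) \<le> \<eta>\<^sup>2 * ((fro_norm R)\<^sup>2 * ((fro_norm U)\<^sup>2 + (fro_norm V)\<^sup>2))"
    using s2 s3 by (intro mult_left_mono) auto
  moreover have "fro_norm (transpose_mat (U - \<eta> \<cdot>\<^sub>m P) * (U - \<eta> \<cdot>\<^sub>m P) - transpose_mat (V - \<eta> \<cdot>\<^sub>m Q) * (V - \<eta> \<cdot>\<^sub>m Q))
     = fro_norm ((transpose_mat U * U - transpose_mat V * V) + (\<eta>\<^sup>2) \<cdot>\<^sub>m (transpose_mat P * P - transpose_mat Q * Q))"
    using eq by (rule arg_cong)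
  ultimately have "fro_norm (transpose_mat (U - \<eta> \<cdot>\<^sub>m P) * (U - \<eta> \<cdot>\<^sub>m P) - transpose_mat (V - \<eta> \<cdot>\<^sub>m Q) * (V - \<eta> \<cdot>\<^sub>m Q))
     \<le> fro_norm (transpose_mat U * U - transpose_mat V * V) + \<eta>\<^sup>2 * ((fro_norm R)\<^sup>2 * ((fro_norm U)\<^sup>2 + (fro_norm V)\<^sup>2))"
    using s1 by linarith
  then show ?thesis unfolding P_def Q_def R_def .
qed

lemma diag_sq_le: fixes A :: "real mat" assumes "A \<in> carrier_mat r r"
  shows "(\<Sum>j<r. (A $$ (j,j))\<^sup>2) \<le> (fro_norm A)\<^sup>2"
proof -
  have "(fro_norm A)\<^sup>2 = (\<Sum>i<r. \<Sum>j<r. (A $$ (i,j))\<^sup>2)"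
    using assms unfolding fro_norm_def by (simp add: sum_nonneg)
  moreover have "(\<Sum>i<r. (A $$ (i,i))\<^sup>2) \<le> (\<Sum>i<r. \<Sum>j<r. (A $$ (i,j))\<^sup>2)"
    by (intro sum_mono member_le_sum) auto
  ultimately show ?thesis by simp
qed

lemma fro_sq_trace: fixes U :: "real mat" assumes "U \<in> carrier_mat n r"
  shows "(fro_norm U)\<^sup>2 = (\<Sum>j<r. (transpose_mat U * U) $$ (j,j))"
proof -
  have "(fro_norm U)\<^sup>2 = (\<Sum>i<n. \<Sum>j<r. (U $$ (i,j))\<^sup>2)"
    using assms unfolding fro_norm_def by (simp add: sum_nonneg)
  also have "\<dots> = (\<Sum>j<r. \<Sum>i<n. (U $$ (i,j))\<^sup>2)" by (rule sum.swap)
  also have "\<dots> = (\<Sum>j<r. (transpose_mat U * U) $$ (j,j))"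
    using assms by (intro sum.cong refl) (simp add: multT_entry[OF assms assms] power2_eq_square del: index_mult_mat(1))
  finally show ?thesis .
qed

lemma bal_bound:
  fixes U V :: "real mat"
  assumes U: "U \<in> carrier_mat n r" and V: "V \<in> carrier_mat p r" and m: "m \<ge> 0"
    and hD: "fro_norm (transpose_mat U * U - transpose_mat V * V) \<le> m"
    and hP: "fro_norm (U * transpose_mat V) \<le> 3 * m"
  shows "(fro_norm U)\<^sup>2 \<le> 4 * sqrt (real r) * m"
proof -
  define A where "A = transpose_mat U * U"
  define B where "B = transpose_mat V * V"
  have A: "A \<in> carrier_mat r r" and B: "B \<in> carrier_mat r r" unfolding A_def B_def using U V by auto
  have AB: "A = B + (A - B)" using A B by (intro eq_matI) auto
  let ?x = "fro_norm A"
  have x0: "?x \<ge> 0" by (rule fro_nonneg)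
  have fAB: "fip A B = (fro_norm (U * transpose_mat V))\<^sup>2"
  proof -
    have g1: "fip A B = fip (V * A) V"
      unfolding B_def using fip_mult1[OF A, of "transpose_mat V" p V] V by simp
    have g2: "fip (V * A) V = fip V (V * A)" using V A by (subst fip_sym) auto
    have g3: "V * A = (V * transpose_mat U) * U" unfolding A_def using U V by (subst assoc_mult_mat[of _ p r _ n _ r]) auto
    have g4: "fip V ((V * transpose_mat U) * U) = fip (V * transpose_mat U) (V * transpose_mat U)"
      using fip_mult2[OF V, of "V * transpose_mat U" n U] U V by simp
    have g5: "V * transpose_mat U = transpose_mat (U * transpose_mat V)"
      using U V by (simp add: transpose_mult[of _ n r _ p])
    have "fip A B = (fro_norm (V * transpose_mat U))\<^sup>2" using g1 g2 g3 g4 by (simp add: fro_sq)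
    then show ?thesis unfolding g5 fro_transpose .
  qed
  have "?x\<^sup>2 = fip A A" by (simp add: fro_sq)
  also have "\<dots> = fip A B + fip A (A - B)" using A B by (subst AB, subst fip_add_right) auto
  also have "\<dots> \<le> (3 * m)\<^sup>2 + ?x * m"
  proof (rule add_mono)
    show "fip A B \<le> (3 * m)\<^sup>2" unfolding fAB using hP fro_nonneg by (intro power_mono) auto
    have "fip A (A - B) \<le> ?x * fro_norm (A - B)" using A B by (intro fip_cs) auto
    also have "\<dots> \<le> ?x * m" using hD x0 unfolding A_def B_def by (intro mult_left_mono) auto
    finally show "fip A (A - B) \<le> ?x * m" .
  qed
  finally have x2: "?x\<^sup>2 \<le> (3 * m)\<^sup>2 + ?x * m" .
  have x4: "?x \<le> 4 * m"
  proof (rule ccontr)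
    assume "\<not> ?x \<le> 4 * m"
    then have "?x - 4 * m > 0" "?x + 3 * m > 0" using m by auto
    then have "(?x - 4 * m) * (?x + 3 * m) > 0" by simp
    moreover have "(?x - 4 * m) * (?x + 3 * m) = ?x\<^sup>2 - ?x * m - 12 * m\<^sup>2"
      by (simp add: power2_eq_square algebra_simps)
    ultimately have "?x\<^sup>2 - ?x * m - 12 * m\<^sup>2 > 0" by simp
    moreover have "(3 * m)\<^sup>2 = 9 * m\<^sup>2" "m\<^sup>2 \<ge> 0" by (simp_all add: power2_eq_square)
    ultimately show False using x2 by linarith
  qed
  have t0: "(fro_norm U)\<^sup>2 = (\<Sum>j<r. A $$ (j,j))" unfolding A_def by (rule fro_sq_trace[OF U])
  have "((fro_norm U)\<^sup>2)\<^sup>2 = (\<Sum>j<r. A $$ (j,j))\<^sup>2" by (simp only: t0)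
  also have "\<dots> \<le> (\<Sum>j<r. (A $$ (j,j))\<^sup>2) * card {..<r}" by (rule sum_squared_le_sum_of_squares)
  also have "\<dots> = (\<Sum>j<r. (A $$ (j,j))\<^sup>2) * real r" by simp
  also have "\<dots> \<le> ?x\<^sup>2 * real r" by (rule mult_right_mono[OF diag_sq_le[OF A]]) simp
  also have "\<dots> \<le> (4 * m)\<^sup>2 * real r" by (rule mult_right_mono[OF power_mono[OF x4 x0]]) simp
  also have "\<dots> = (4 * sqrt (real r) * m)\<^sup>2" by (simp add: power_mult_distrib)
  finally have fin: "((fro_norm U)\<^sup>2)\<^sup>2 \<le> (4 * sqrt (real r) * m)\<^sup>2" .
  show ?thesis by (rule power2_le_imp_le[OF fin]) (use m in simp)
qed


lemma eta_sq:
  assumes m: "fro_norm M > 0" and e: "\<epsilon> \<ge> 0"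
  shows "(mf_step M r \<epsilon> t)\<^sup>2 = (\<epsilon> / real r) / (10000 * (real t + 1)\<^sup>2 * (fro_norm M)^3)"
proof -
  let ?m = "fro_norm M"
  have p: "(?m powr (3/2))\<^sup>2 = ?m^3"
  proof -
    have "(?m powr (3/2))\<^sup>2 = ?m powr (3/2 + 3/2)" by (simp add: power2_eq_square powr_add[symmetric])
    also have "\<dots> = ?m powr 3" by simp
    also have "\<dots> = ?m^3" using m by simp
    finally show ?thesis .
  qed
  have s: "(sqrt (\<epsilon> / real r))\<^sup>2 = \<epsilon> / real r" using e by simp
  show ?thesis unfolding mf_step_def power_divide s
    by (simp add: power_mult_distrib p del: of_nat_Suc)
qed

lemma eta_nonneg: "\<epsilon> \<ge> 0 \<Longrightarrow> mf_step M r \<epsilon> t \<ge> 0"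
  unfolding mf_step_def by (auto intro!: divide_nonneg_nonneg)

lemma sq_le_imp: fixes a b :: real assumes "a \<ge> 0" "b \<ge> 0" "a\<^sup>2 \<le> b\<^sup>2" shows "a \<le> b"
  using assms power2_le_imp_le by blast

lemma eps_r: fixes \<epsilon> :: real assumes e: "\<epsilon> \<ge> 0"
  shows "(\<epsilon> / real r) * real r \<le> \<epsilon>" "(\<epsilon> / real r) * sqrt (real r) \<le> \<epsilon>"
proof -
  show 1: "(\<epsilon> / real r) * real r \<le> \<epsilon>" using e by (cases "r = 0") auto
  have "sqrt (real r) \<le> real r"
  proof (cases "r = 0")
    case False
    then have "real r \<le> (real r)\<^sup>2" by (simp add: power2_eq_square)
    then have "sqrt (real r) \<le> sqrt ((real r)\<^sup>2)" by (rule real_sqrt_le_mono)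
    then show ?thesis by simp
  qed simp
  then have "(\<epsilon> / real r) * sqrt (real r) \<le> (\<epsilon> / real r) * real r"
    using e by (intro mult_left_mono) auto
  then show "(\<epsilon> / real r) * sqrt (real r) \<le> \<epsilon>" using 1 by linarith
qed

lemma step_conds:
  fixes m \<epsilon> \<eta> S \<rho> q T :: real
  assumes m: "m > 0" and e: "0 \<le> \<epsilon>" "\<epsilon> \<le> m" and eta: "\<eta> \<ge> 0"
    and q: "q = \<epsilon> / real r" and T: "T \<ge> 1"
    and eta2: "\<eta>\<^sup>2 = q / (10000 * T * m^3)"
    and S: "0 \<le> S" "S \<le> 8 * sqrt (real r) * m" and rho: "0 \<le> \<rho>" "\<rho> \<le> 2 * m"
  shows "\<eta> * S \<le> 1/10" "\<eta> * \<rho> \<le> 1/50" "\<eta>\<^sup>2 * (\<rho>\<^sup>2 * S) \<le> 32 * \<epsilon> / (10000 * T)"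
proof -
  define K where "K = 10000 * T * m^3"
  have K: "K > 0" unfolding K_def using m T by simp
  have q0: "q \<ge> 0" using q e by simp
  have "m \<noteq> 0" "T \<noteq> 0" using m T by auto
  then have qK: "\<eta>\<^sup>2 * K = q" unfolding eta2 K_def by simp
  have qr: "q * real r \<le> \<epsilon>" "q * sqrt (real r) \<le> \<epsilon>" using eps_r[OF e(1)] q by auto
  have m3: "m^3 = m * m\<^sup>2" by (simp add: power2_eq_square power3_eq_cube)
  have em: "m\<^sup>2 * \<epsilon> \<le> m^3" using e m unfolding m3 by (subst mult.commute, intro mult_right_mono) auto
  have TK: "m^3 \<le> T * m^3" using T m by simp
  have Tm: "T * m^3 \<ge> 0" using T m by simp
  have S2: "S\<^sup>2 \<le> 64 * real r * m\<^sup>2"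
  proof -
    have "S\<^sup>2 \<le> (8 * sqrt (real r) * m)\<^sup>2" using S by (intro power_mono) auto
    also have "\<dots> = 64 * real r * m\<^sup>2" by (simp add: power_mult_distrib)
    finally show ?thesis .
  qed
  have r2: "\<rho>\<^sup>2 \<le> 4 * m\<^sup>2"
  proof -
    have "\<rho>\<^sup>2 \<le> (2 * m)\<^sup>2" using rho by (intro power_mono) auto
    then show ?thesis by (simp add: power_mult_distrib)
  qed
  have "(\<eta> * S)\<^sup>2 * K = (\<eta>\<^sup>2 * K) * S\<^sup>2" by (simp add: power_mult_distrib mult_ac)
  also have "\<dots> = q * S\<^sup>2" by (simp only: qK)
  also have "\<dots> \<le> q * (64 * real r * m\<^sup>2)" using S2 q0 by (rule mult_left_mono)
  also have "\<dots> = 64 * m\<^sup>2 * (q * real r)" by (simp add: mult_ac)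
  also have "\<dots> \<le> 64 * m\<^sup>2 * \<epsilon>" using qr by (intro mult_left_mono) auto
  also have "\<dots> = 64 * (m\<^sup>2 * \<epsilon>)" by (simp add: mult_ac)
  also have "\<dots> \<le> 64 * (T * m^3)" using em TK by linarith
  also have "\<dots> \<le> (1/100) * K" unfolding K_def using Tm by simp
  finally have "(\<eta> * S)\<^sup>2 * K \<le> (1/100) * K" .
  then have "(\<eta> * S)\<^sup>2 \<le> 1/100" using K by (simp add: mult_le_cancel_right_pos)
  moreover have ten: "(1/10::real)\<^sup>2 = 1/100" by (simp add: power2_eq_square)
  ultimately have h: "(\<eta> * S)\<^sup>2 \<le> (1/10)\<^sup>2" by (simp only:)
  show "\<eta> * S \<le> 1/10" by (rule sq_le_imp[OF mult_nonneg_nonneg[OF eta S(1)] _ h]) simp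
  have "(\<eta> * \<rho>)\<^sup>2 * K = (\<eta>\<^sup>2 * K) * \<rho>\<^sup>2" by (simp add: power_mult_distrib mult_ac)
  also have "\<dots> = q * \<rho>\<^sup>2" by (simp only: qK)
  also have "\<dots> \<le> q * (4 * m\<^sup>2)" using r2 q0 by (rule mult_left_mono)
  also have "\<dots> \<le> \<epsilon> * (4 * m\<^sup>2)"
  proof -
    have "q \<le> \<epsilon>"
    proof (cases "r = 0")
      case True then show ?thesis using q e by simp
    next
      case False
      then have "real r \<ge> 1" by simp
      then have "\<epsilon> \<le> \<epsilon> * real r" using mult_left_mono[of 1 "real r" \<epsilon>] e by simp
      then show ?thesis using False by (simp add: q divide_le_eq)
    qed
    then show ?thesis by (rule mult_right_mono) simp
  qed
  also have "\<dots> = 4 * (m\<^sup>2 * \<epsilon>)" by (simp add: mult_ac)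
  also have "\<dots> \<le> 4 * (T * m^3)" using em TK by linarith
  also have "\<dots> \<le> (1/2500) * K" unfolding K_def using Tm by simp
  finally have "(\<eta> * \<rho>)\<^sup>2 * K \<le> (1/2500) * K" .
  then have "(\<eta> * \<rho>)\<^sup>2 \<le> 1/2500" using K by (simp add: mult_le_cancel_right_pos)
  moreover have fif: "(1/50::real)\<^sup>2 = 1/2500" by (simp add: power2_eq_square)
  ultimately have h: "(\<eta> * \<rho>)\<^sup>2 \<le> (1/50)\<^sup>2" by (simp only:)
  show "\<eta> * \<rho> \<le> 1/50" by (rule sq_le_imp[OF mult_nonneg_nonneg[OF eta rho(1)] _ h]) simp
  have "(\<eta>\<^sup>2 * (\<rho>\<^sup>2 * S)) * K = (\<eta>\<^sup>2 * K) * (\<rho>\<^sup>2 * S)" by (simp add: mult_ac)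
  also have "\<dots> = q * (\<rho>\<^sup>2 * S)" by (simp only: qK)
  also have "\<dots> \<le> q * ((4 * m\<^sup>2) * (8 * sqrt (real r) * m))"
    using r2 S q0 by (intro mult_mono mult_left_mono) auto
  also have "\<dots> = 32 * m^3 * (q * sqrt (real r))" by (simp add: m3 mult_ac)
  also have "\<dots> \<le> 32 * m^3 * \<epsilon>" using qr m by (intro mult_left_mono) auto
  also have "\<dots> = (32 * \<epsilon> / (10000 * T)) * K" unfolding K_def using T by simp
  finally have "(\<eta>\<^sup>2 * (\<rho>\<^sup>2 * S)) * K \<le> (32 * \<epsilon> / (10000 * T)) * K" .
  then show "\<eta>\<^sup>2 * (\<rho>\<^sup>2 * S) \<le> 32 * \<epsilon> / (10000 * T)" using K by (rule mult_right_le_imp_le)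
qed


lemma gd_Suc: "mf_gd M r \<epsilon> U0 V0 (Suc t) =
  (fst (mf_gd M r \<epsilon> U0 V0 t) - mf_step M r \<epsilon> t \<cdot>\<^sub>m ((fst (mf_gd M r \<epsilon> U0 V0 t) * transpose_mat (snd (mf_gd M r \<epsilon> U0 V0 t)) - M) * snd (mf_gd M r \<epsilon> U0 V0 t)),
   snd (mf_gd M r \<epsilon> U0 V0 t) - mf_step M r \<epsilon> t \<cdot>\<^sub>m (transpose_mat (fst (mf_gd M r \<epsilon> U0 V0 t) * transpose_mat (snd (mf_gd M r \<epsilon> U0 V0 t)) - M) * fst (mf_gd M r \<epsilon> U0 V0 t)))"
  by (simp add: Let_def split: prod.split)

lemma gd_carrier:
  assumes "U0 \<in> carrier_mat d1 r" "V0 \<in> carrier_mat d2 r" "M \<in> carrier_mat d1 d2"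
  shows "fst (mf_gd M r \<epsilon> U0 V0 t) \<in> carrier_mat d1 r \<and> snd (mf_gd M r \<epsilon> U0 V0 t) \<in> carrier_mat d2 r"
proof (induction t)
  case 0 then show ?case using assms by simp
next
  case (Suc t) then show ?case using assms by (simp only: gd_Suc) auto
qed

lemma lin_aux: "(x::real) \<le> w \<Longrightarrow> A = x \<Longrightarrow> B = E - y \<Longrightarrow> C = E - z \<Longrightarrow> w = y - z \<Longrightarrow> A + B \<le> C"
  by linarith

lemma telescope:
  fixes a \<epsilon> :: real assumes a: "a \<ge> 1" and e: "\<epsilon> \<ge> 0"
  shows "32 * \<epsilon> / (10000 * a\<^sup>2) + 64 / 10000 * \<epsilon> * (1 - 1 / a) \<le> 64 / 10000 * \<epsilon> * (1 - 1 / (a + 1))"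
proof -
  have "32 / a\<^sup>2 \<le> 64 / a - 64 / (a + 1)"
  proof -
    have "64 / a - 64 / (a + 1) = 64 / (a * (a + 1))" using a by (simp add: field_simps)
    moreover have "32 / a\<^sup>2 \<le> 64 / (a * (a + 1))"
      using a by (simp add: divide_simps power2_eq_square)
    ultimately show ?thesis by simp
  qed
  then have "\<epsilon> / 10000 * (32 / a\<^sup>2) \<le> \<epsilon> / 10000 * (64 / a - 64 / (a + 1))"
    using e by (intro mult_left_mono) auto
  moreover have "32 * \<epsilon> / (10000 * a\<^sup>2) = \<epsilon> / 10000 * (32 / a\<^sup>2)" by simp
  moreover have "64 / 10000 * \<epsilon> * (1 - 1 / a) = 64 / 10000 * \<epsilon> - \<epsilon> / 10000 * (64 / a)"
    by (simp add: right_diff_distrib)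
  moreover have "64 / 10000 * \<epsilon> * (1 - 1 / (a + 1)) = 64 / 10000 * \<epsilon> - \<epsilon> / 10000 * (64 / (a + 1))"
    by (simp add: right_diff_distrib)
  moreover have "\<epsilon> / 10000 * (64 / a - 64 / (a + 1)) = \<epsilon> / 10000 * (64 / a) - \<epsilon> / 10000 * (64 / (a + 1))"
    by (simp only: right_diff_distrib)
  ultimately show ?thesis by (rule lin_aux)
qed

theorem det_main:
  fixes M U0 V0 :: "real mat"
  assumes M: "M \<in> carrier_mat d1 d2" and U0: "U0 \<in> carrier_mat d1 r" and V0: "V0 \<in> carrier_mat d2 r"
    and e: "0 < \<epsilon>" "\<epsilon> < fro_norm M" and init: "(fro_norm U0)\<^sup>2 + (fro_norm V0)\<^sup>2 \<le> \<epsilon> / 4"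
  shows "(\<forall>t. fro_norm (transpose_mat (fst (mf_gd M r \<epsilon> U0 V0 t)) * fst (mf_gd M r \<epsilon> U0 V0 t)
                   - transpose_mat (snd (mf_gd M r \<epsilon> U0 V0 t)) * snd (mf_gd M r \<epsilon> U0 V0 t)) \<le> \<epsilon>)
    \<and> (\<forall>t. mf_obj M (fst (mf_gd M r \<epsilon> U0 V0 (Suc t))) (snd (mf_gd M r \<epsilon> U0 V0 (Suc t)))
            \<le> mf_obj M (fst (mf_gd M r \<epsilon> U0 V0 t)) (snd (mf_gd M r \<epsilon> U0 V0 t)))
    \<and> mf_obj M (fst (mf_gd M r \<epsilon> U0 V0 0)) (snd (mf_gd M r \<epsilon> U0 V0 0)) \<le> 2 * (fro_norm M)\<^sup>2
    \<and> (\<forall>t. (fro_norm (fst (mf_gd M r \<epsilon> U0 V0 t)))\<^sup>2 \<le> 5 * sqrt (real r) * fro_norm M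
         \<and> (fro_norm (snd (mf_gd M r \<epsilon> U0 V0 t)))\<^sup>2 \<le> 5 * sqrt (real r) * fro_norm M)"
proof -
  define m where "m = fro_norm M"
  have m: "m > 0" using e unfolding m_def by simp
  have em: "\<epsilon> \<le> m" using e unfolding m_def by simp
  define Uf where "Uf = (\<lambda>t. fst (mf_gd M r \<epsilon> U0 V0 t))"
  define Vf where "Vf = (\<lambda>t. snd (mf_gd M r \<epsilon> U0 V0 t))"
  define Rf where "Rf = (\<lambda>t. Uf t * transpose_mat (Vf t) - M)"
  define Df where "Df = (\<lambda>t. transpose_mat (Uf t) * Uf t - transpose_mat (Vf t) * Vf t)"
  have cU: "Uf t \<in> carrier_mat d1 r" and cV: "Vf t \<in> carrier_mat d2 r" for t
    unfolding Uf_def Vf_def using gd_carrier[OF U0 V0 M] by auto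
  have U0': "Uf 0 = U0" and V0': "Vf 0 = V0" unfolding Uf_def Vf_def by simp_all
  have UfS: "Uf (Suc t) = Uf t - mf_step M r \<epsilon> t \<cdot>\<^sub>m (Rf t * Vf t)" for t
    unfolding Uf_def Vf_def Rf_def by (simp only: gd_Suc fst_conv)
  have VfS: "Vf (Suc t) = Vf t - mf_step M r \<epsilon> t \<cdot>\<^sub>m (transpose_mat (Rf t) * Uf t)" for t
    unfolding Uf_def Vf_def Rf_def by (simp only: gd_Suc snd_conv)
  have nU0: "fro_norm U0 \<ge> 0" "fro_norm V0 \<ge> 0" by (simp_all add: fro_nonneg)
  have R0: "fro_norm (Rf 0) \<le> 2 * m"
  proof -
    have "fro_norm (Rf 0) \<le> fro_norm (U0 * transpose_mat V0) + m"
      unfolding Rf_def U0' V0' m_def by (rule fro_minus) (use U0 V0 M in auto)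
    also have "fro_norm (U0 * transpose_mat V0) \<le> fro_norm U0 * fro_norm V0"
      using fro_mult[of U0 "transpose_mat V0"] U0 V0 by (simp add: fro_transpose)
    also have "fro_norm U0 * fro_norm V0 \<le> \<epsilon> / 8"
    proof -
      have "0 \<le> (fro_norm U0 - fro_norm V0)\<^sup>2" by simp
      then have "2 * (fro_norm U0 * fro_norm V0) \<le> (fro_norm U0)\<^sup>2 + (fro_norm V0)\<^sup>2"
        by (simp add: power2_eq_square algebra_simps)
      then show ?thesis using init by linarith
    qed
    finally show ?thesis using em e by linarith
  qed
  have D0: "fro_norm (Df 0) \<le> \<epsilon> / 4"
  proof -
    have "fro_norm (Df 0) \<le> fro_norm (transpose_mat U0 * U0) + fro_norm (transpose_mat V0 * V0)"
      unfolding Df_def U0' V0' by (rule fro_minus) (use U0 V0 in auto)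
    also have "\<dots> \<le> (fro_norm U0)\<^sup>2 + (fro_norm V0)\<^sup>2"
      using fro_mult[of "transpose_mat U0" U0] fro_mult[of "transpose_mat V0" V0] U0 V0
      by (intro add_mono) (auto simp: fro_transpose power2_eq_square)
    finally show ?thesis using init by linarith
  qed
  define c where "c = 64 / 10000 * \<epsilon>"
  define Inv where "Inv = (\<lambda>t. (fro_norm (Rf t))\<^sup>2 \<le> (fro_norm (Rf 0))\<^sup>2
       \<and> fro_norm (Df t) \<le> fro_norm (Df 0) + c * (1 - 1 / (real t + 1)))"
  have cons: "fro_norm (Rf t) \<le> 2 * m \<and> fro_norm (Df t) \<le> \<epsilon> / 2
     \<and> (fro_norm (Uf t))\<^sup>2 \<le> 4 * sqrt (real r) * m \<and> (fro_norm (Vf t))\<^sup>2 \<le> 4 * sqrt (real r) * m"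
    if I: "Inv t" for t
  proof -
    have cUt: "Uf t \<in> carrier_mat d1 r" and cVt: "Vf t \<in> carrier_mat d2 r" by (rule cU, rule cV)
    have I1: "(fro_norm (Rf t))\<^sup>2 \<le> (fro_norm (Rf 0))\<^sup>2" and
      I2: "fro_norm (Df t) \<le> fro_norm (Df 0) + c * (1 - 1 / (real t + 1))" using I unfolding Inv_def by auto
    have "(fro_norm (Rf 0))\<^sup>2 \<le> (2 * m)\<^sup>2" by (rule power_mono[OF R0 fro_nonneg])
    then have "(fro_norm (Rf t))\<^sup>2 \<le> (2 * m)\<^sup>2" using I1 by linarith
    then have R: "fro_norm (Rf t) \<le> 2 * m" using m by (rule_tac sq_le_imp) (auto simp: fro_nonneg)
    have "c * (1 - 1 / (real t + 1)) \<le> c"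
    proof -
      have "0 \<le> c * (1 / (real t + 1))" unfolding c_def using e by simp
      moreover have "c * (1 - 1 / (real t + 1)) = c - c * (1 / (real t + 1))" by (simp only: right_diff_distrib mult_1_right)
      ultimately show ?thesis by linarith
    qed
    then have D: "fro_norm (Df t) \<le> \<epsilon> / 2" using I2 D0 e unfolding c_def by linarith
    have P: "fro_norm (Uf t * transpose_mat (Vf t)) \<le> 3 * m"
    proof -
      have RM: "Rf t \<in> carrier_mat d1 d2" unfolding Rf_def using cUt cVt M by auto
      have "Uf t * transpose_mat (Vf t) = Rf t + M" unfolding Rf_def using cUt cVt M by (intro eq_matI) auto
      moreover have "fro_norm (Rf t + M) \<le> fro_norm (Rf t) + m"
        unfolding m_def by (rule fro_add) (use RM M in simp)
      ultimately have "fro_norm (Uf t * transpose_mat (Vf t)) \<le> fro_norm (Rf t) + m" by simp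
      then show ?thesis using R by linarith
    qed
    have D': "fro_norm (transpose_mat (Uf t) * Uf t - transpose_mat (Vf t) * Vf t) \<le> m"
      using D em e unfolding Df_def by simp
    have u: "(fro_norm (Uf t))\<^sup>2 \<le> 4 * sqrt (real r) * m"
      by (rule bal_bound[OF cUt cVt _ D' P]) (use m in simp)
    have D'': "fro_norm (transpose_mat (Vf t) * Vf t - transpose_mat (Uf t) * Uf t) \<le> m"
      using D' fro_minus_comm[of "transpose_mat (Vf t) * Vf t" "transpose_mat (Uf t) * Uf t"] cUt cVt by simp
    have P': "fro_norm (Vf t * transpose_mat (Uf t)) \<le> 3 * m"
    proof -
      have "transpose_mat (Uf t * transpose_mat (Vf t)) = Vf t * transpose_mat (Uf t)"
        using cUt cVt by (simp add: transpose_mult[of _ d1 r _ d2])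
      then show ?thesis using P by (metis fro_transpose)
    qed
    have v: "(fro_norm (Vf t))\<^sup>2 \<le> 4 * sqrt (real r) * m"
      by (rule bal_bound[OF cVt cUt _ D'' P']) (use m in simp)
    show ?thesis using R D u v by simp
  qed
  have step: "(fro_norm (Rf (Suc t)))\<^sup>2 \<le> (fro_norm (Rf t))\<^sup>2
     \<and> fro_norm (Df (Suc t)) \<le> fro_norm (Df t) + 32 * \<epsilon> / (10000 * (real t + 1)\<^sup>2)"
    if I: "Inv t" for t
  proof -
    let ?\<eta> = "mf_step M r \<epsilon> t"
    let ?S = "(fro_norm (Uf t))\<^sup>2 + (fro_norm (Vf t))\<^sup>2"
    have C: "fro_norm (Rf t) \<le> 2 * m" "(fro_norm (Uf t))\<^sup>2 \<le> 4 * sqrt (real r) * m"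
      "(fro_norm (Vf t))\<^sup>2 \<le> 4 * sqrt (real r) * m" using cons[OF I] by auto
    have S: "0 \<le> ?S" "?S \<le> 8 * sqrt (real r) * m" using C by auto
    have eta: "?\<eta> \<ge> 0" using e by (intro eta_nonneg) simp
    have eta2: "?\<eta>\<^sup>2 = (\<epsilon> / real r) / (10000 * (real t + 1)\<^sup>2 * m^3)"
      unfolding m_def by (rule eta_sq) (use e in auto)
    have T: "(real t + 1)\<^sup>2 \<ge> 1" by (rule one_le_power) simp
    have rho: "0 \<le> fro_norm (Rf t)" "fro_norm (Rf t) \<le> 2 * m" using C by (auto simp: fro_nonneg)
    note sc = step_conds[OF m e(1)[THEN less_imp_le] em eta refl T eta2 S rho]
    have hS: "?\<eta> * ?S \<le> 1/10" using sc(1) .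
    have hr: "?\<eta> * fro_norm (Uf t * transpose_mat (Vf t) - M) \<le> 1/50" using sc(2) unfolding Rf_def .
    have "(fro_norm ((Uf t - ?\<eta> \<cdot>\<^sub>m ((Uf t * transpose_mat (Vf t) - M) * Vf t))
            * transpose_mat (Vf t - ?\<eta> \<cdot>\<^sub>m (transpose_mat (Uf t * transpose_mat (Vf t) - M) * Uf t)) - M))\<^sup>2
         \<le> (fro_norm (Uf t * transpose_mat (Vf t) - M))\<^sup>2"
      by (rule step_R[OF cU cV M eta hS hr])
    then have s1: "(fro_norm (Rf (Suc t)))\<^sup>2 \<le> (fro_norm (Rf t))\<^sup>2"
      unfolding Rf_def UfS VfS .
    have "fro_norm (transpose_mat (Uf t - ?\<eta> \<cdot>\<^sub>m ((Uf t * transpose_mat (Vf t) - M) * Vf t)) * (Uf t - ?\<eta> \<cdot>\<^sub>m ((Uf t * transpose_mat (Vf t) - M) * Vf t))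
           - transpose_mat (Vf t - ?\<eta> \<cdot>\<^sub>m (transpose_mat (Uf t * transpose_mat (Vf t) - M) * Uf t)) * (Vf t - ?\<eta> \<cdot>\<^sub>m (transpose_mat (Uf t * transpose_mat (Vf t) - M) * Uf t)))
         \<le> fro_norm (transpose_mat (Uf t) * Uf t - transpose_mat (Vf t) * Vf t)
            + ?\<eta>\<^sup>2 * ((fro_norm (Uf t * transpose_mat (Vf t) - M))\<^sup>2 * ((fro_norm (Uf t))\<^sup>2 + (fro_norm (Vf t))\<^sup>2))"
      by (rule step_D[OF cU cV M])
    then have "fro_norm (Df (Suc t)) \<le> fro_norm (Df t) + ?\<eta>\<^sup>2 * ((fro_norm (Rf t))\<^sup>2 * ?S)"
      unfolding Df_def UfS VfS Rf_def .
    then have s2: "fro_norm (Df (Suc t)) \<le> fro_norm (Df t) + 32 * \<epsilon> / (10000 * (real t + 1)\<^sup>2)"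
      using sc(3) by linarith
    show ?thesis using s1 s2 by simp
  qed
  have inv: "Inv t" for t
  proof (induction t)
    case 0 then show ?case unfolding Inv_def by simp
  next
    case (Suc t)
    have st: "(fro_norm (Rf (Suc t)))\<^sup>2 \<le> (fro_norm (Rf t))\<^sup>2"
      "fro_norm (Df (Suc t)) \<le> fro_norm (Df t) + 32 * \<epsilon> / (10000 * (real t + 1)\<^sup>2)"
      using step[OF Suc] by auto
    have tel: "32 * \<epsilon> / (10000 * (real t + 1)\<^sup>2) + 64 / 10000 * \<epsilon> * (1 - 1 / (real t + 1))
       \<le> 64 / 10000 * \<epsilon> * (1 - 1 / ((real t + 1) + 1))"
      by (rule telescope) (use e in auto)
    have "real (Suc t) + 1 = (real t + 1) + 1" by simp
    then show ?case using Suc st tel unfolding Inv_def c_def by (simp only:) linarith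
  qed
  have main1: "fro_norm (Df t) \<le> \<epsilon>" for t using cons[OF inv[of t]] e by linarith
  have main2: "(fro_norm (Rf (Suc t)))\<^sup>2 \<le> (fro_norm (Rf t))\<^sup>2" for t using step[OF inv[of t]] by simp
  have main3: "(fro_norm (Rf 0))\<^sup>2 / 2 \<le> 2 * m\<^sup>2"
  proof -
    have "(fro_norm (Rf 0))\<^sup>2 \<le> (2 * m)\<^sup>2" using R0 by (intro power_mono) (auto simp: fro_nonneg)
    then show ?thesis by (simp add: power_mult_distrib)
  qed
  have main4: "(fro_norm (Uf t))\<^sup>2 \<le> 5 * sqrt (real r) * m \<and> (fro_norm (Vf t))\<^sup>2 \<le> 5 * sqrt (real r) * m" for t
  proof -
    have "4 * sqrt (real r) * m \<le> 5 * sqrt (real r) * m" using m by (intro mult_right_mono) auto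
    then show ?thesis using cons[OF inv[of t]] by linarith
  qed
  show ?thesis
    using main1 main2 main3 main4 unfolding mf_obj_def Df_def Rf_def Uf_def Vf_def m_def
    by (auto simp: divide_right_mono)
qed


lemma finite_init_index: "finite (init_index d1 d2 r)"
  unfolding init_index_def by auto

lemma card_init_index: "card (init_index d1 d2 r) \<le> d1 * r + d2 * r"
proof -
  have "card (init_index d1 d2 r) \<le> card (Inl ` ({..<d1} \<times> {..<r}) :: ((nat \<times> nat) + (nat \<times> nat)) set)
      + card (Inr ` ({..<d2} \<times> {..<r}) :: ((nat \<times> nat) + (nat \<times> nat)) set)"
    unfolding init_index_def by (rule card_Un_le)
  also have "\<dots> \<le> card ({..<d1} \<times> {..<r}) + card ({..<d2} \<times> {..<r})"
    by (intro add_mono card_image_le) auto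
  finally show ?thesis by (simp add: card_cartesian_product)
qed

lemma sets_N: "sets (density lborel (normal_density 0 \<sigma>)) = sets borel" by simp

lemma prob_N: "\<sigma> > 0 \<Longrightarrow> prob_space (density lborel (normal_density 0 \<sigma>))"
  by (rule prob_space_normal_density)

lemma prob_P: "\<sigma> > 0 \<Longrightarrow> prob_space (gauss_init d1 d2 r \<sigma>)"
  unfolding gauss_init_def by (rule prob_space_PiM) (rule prob_N)

lemma comp_meas: assumes "x \<in> init_index d1 d2 r"
  shows "(\<lambda>\<omega>. \<omega> x) \<in> borel_measurable (gauss_init d1 d2 r \<sigma>)"
proof -
  have "(\<lambda>\<omega>. \<omega> x) \<in> measurable (gauss_init d1 d2 r \<sigma>) (density lborel (normal_density 0 \<sigma>))"
    unfolding gauss_init_def using measurable_component_singleton[where M="\<lambda>_. density lborel (normal_density 0 \<sigma>)", OF assms] by simp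
  then show ?thesis using measurable_cong_sets[OF refl sets_N] by blast
qed

lemma second_moment:
  assumes s: "\<sigma> > 0"
  shows "integrable (density lborel (normal_density 0 \<sigma>)) (\<lambda>x. x\<^sup>2)"
    "integral\<^sup>L (density lborel (normal_density 0 \<sigma>)) (\<lambda>x. x\<^sup>2) = \<sigma>\<^sup>2"
proof -
  have h: "has_bochner_integral lborel (\<lambda>x. normal_density 0 \<sigma> x * x\<^sup>2) (\<sigma>\<^sup>2)"
    using normal_moment_even[OF s, where k=1 and \<mu>=0] s by (simp add: power2_eq_square field_simps)
  have "integrable lborel (\<lambda>x. normal_density 0 \<sigma> x *\<^sub>R x\<^sup>2)" using integrable.intros[OF h] by simp
  then show "integrable (density lborel (normal_density 0 \<sigma>)) (\<lambda>x. x\<^sup>2)"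
    by (subst integrable_density) auto
  have "integral\<^sup>L (density lborel (normal_density 0 \<sigma>)) (\<lambda>x. x\<^sup>2) = integral\<^sup>L lborel (\<lambda>x. normal_density 0 \<sigma> x *\<^sub>R x\<^sup>2)"
    by (rule integral_density) auto
  also have "\<dots> = \<sigma>\<^sup>2" using has_bochner_integral_integral_eq[OF h] by simp
  finally show "integral\<^sup>L (density lborel (normal_density 0 \<sigma>)) (\<lambda>x. x\<^sup>2) = \<sigma>\<^sup>2" .
qed

lemma comp_moment:
  assumes s: "\<sigma> > 0" and x: "x \<in> init_index d1 d2 r"
  shows "integrable (gauss_init d1 d2 r \<sigma>) (\<lambda>\<omega>. (\<omega> x)\<^sup>2)"
    "integral\<^sup>L (gauss_init d1 d2 r \<sigma>) (\<lambda>\<omega>. (\<omega> x)\<^sup>2) = \<sigma>\<^sup>2"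
proof -
  let ?N = "density lborel (normal_density 0 \<sigma>)"
  let ?P = "gauss_init d1 d2 r \<sigma>"
  have d: "distr ?P ?N (\<lambda>\<omega>. \<omega> x) = ?N"
    unfolding gauss_init_def by (rule distr_PiM_component[OF prob_N[OF s] x])
  have m: "(\<lambda>\<omega>. \<omega> x) \<in> measurable ?P ?N"
    unfolding gauss_init_def using measurable_component_singleton[where M="\<lambda>_. density lborel (normal_density 0 \<sigma>)", OF x] by simp
  have f: "(\<lambda>y::real. y\<^sup>2) \<in> borel_measurable ?N" using measurable_cong_sets[OF sets_N refl] by auto
  show "integrable ?P (\<lambda>\<omega>. (\<omega> x)\<^sup>2)"
    using integrable_distr_eq[OF m f] d second_moment(1)[OF s] by simp
  show "integral\<^sup>L ?P (\<lambda>\<omega>. (\<omega> x)\<^sup>2) = \<sigma>\<^sup>2"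
    using integral_distr[OF m f] d second_moment(2)[OF s] by simp
qed

lemma markov_bound:
  assumes s: "\<sigma> > 0" and c: "c > 0"
  shows "measure (gauss_init d1 d2 r \<sigma>) {\<omega> \<in> space (gauss_init d1 d2 r \<sigma>). (\<Sum>x\<in>init_index d1 d2 r. (\<omega> x)\<^sup>2) < c}
     \<ge> 1 - real (card (init_index d1 d2 r)) * \<sigma>\<^sup>2 / c"
proof -
  let ?P = "gauss_init d1 d2 r \<sigma>" and ?I = "init_index d1 d2 r"
  let ?u = "\<lambda>\<omega>. \<Sum>x\<in>?I. (\<omega> x)\<^sup>2"
  interpret prob_space ?P by (rule prob_P[OF s])
  have um: "?u \<in> borel_measurable ?P"
    by (intro borel_measurable_sum borel_measurable_power comp_meas)
  have ui: "integrable ?P ?u" by (rule Bochner_Integration.integrable_sum) (rule comp_moment(1)[OF s])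
  have ue: "integral\<^sup>L ?P ?u = real (card ?I) * \<sigma>\<^sup>2"
    using comp_moment[OF s] by (subst Bochner_Integration.integral_sum) auto
  have A: "{\<omega> \<in> space ?P. c \<le> ?u \<omega>} \<in> sets ?P" using um by measurable
  have mk: "measure ?P {\<omega> \<in> space ?P. c \<le> ?u \<omega>} \<le> integral\<^sup>L ?P ?u / c"
    by (rule integral_Markov_inequality_measure[OF ui A]) (use c in \<open>auto intro!: AE_I2 sum_nonneg\<close>)
  have "{\<omega> \<in> space ?P. ?u \<omega> < c} = space ?P - {\<omega> \<in> space ?P. c \<le> ?u \<omega>}" by auto
  then have "measure ?P {\<omega> \<in> space ?P. ?u \<omega> < c} = 1 - measure ?P {\<omega> \<in> space ?P. c \<le> ?u \<omega>}"
    using prob_compl[OF A] by simp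
  then show ?thesis using mk ue by simp
qed


definition mat_meas :: "'a measure \<Rightarrow> nat \<Rightarrow> nat \<Rightarrow> ('a \<Rightarrow> real mat) \<Rightarrow> bool" where
  "mat_meas P n m F \<longleftrightarrow> (\<forall>\<omega>. F \<omega> \<in> carrier_mat n m) \<and> (\<forall>i<n. \<forall>j<m. (\<lambda>\<omega>. F \<omega> $$ (i,j)) \<in> borel_measurable P)"

lemma mm_dims: "mat_meas P n m F \<Longrightarrow> dim_row (F \<omega>) = n \<and> dim_col (F \<omega>) = m"
  unfolding mat_meas_def by auto

lemma mm_ent: "mat_meas P n m F \<Longrightarrow> i < n \<Longrightarrow> j < m \<Longrightarrow> (\<lambda>\<omega>. F \<omega> $$ (i,j)) \<in> borel_measurable P"
  unfolding mat_meas_def by auto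

lemma mm_add: assumes F: "mat_meas P n m F" and G: "mat_meas P n m G" shows "mat_meas P n m (\<lambda>\<omega>. F \<omega> + G \<omega>)"
proof -
  have d: "dim_row (F \<omega>) = n" "dim_col (F \<omega>) = m" "dim_row (G \<omega>) = n" "dim_col (G \<omega>) = m" for \<omega>
    using mm_dims[OF F] mm_dims[OF G] by auto
  have "(\<lambda>\<omega>. (F \<omega> + G \<omega>) $$ (i,j)) \<in> borel_measurable P" if "i < n" "j < m" for i j
  proof -
    have "(\<lambda>\<omega>. (F \<omega> + G \<omega>) $$ (i,j)) = (\<lambda>\<omega>. F \<omega> $$ (i,j) + G \<omega> $$ (i,j))" using that by (intro ext) (simp add: d)
    also have "\<dots> \<in> borel_measurable P" by (intro borel_measurable_add mm_ent[OF F] mm_ent[OF G] that)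
    finally show ?thesis .
  qed
  then show ?thesis unfolding mat_meas_def using d by auto
qed

lemma mm_minus: assumes F: "mat_meas P n m F" and G: "mat_meas P n m G" shows "mat_meas P n m (\<lambda>\<omega>. F \<omega> - G \<omega>)"
proof -
  have d: "dim_row (F \<omega>) = n" "dim_col (F \<omega>) = m" "dim_row (G \<omega>) = n" "dim_col (G \<omega>) = m" for \<omega>
    using mm_dims[OF F] mm_dims[OF G] by auto
  have "(\<lambda>\<omega>. (F \<omega> - G \<omega>) $$ (i,j)) \<in> borel_measurable P" if "i < n" "j < m" for i j
  proof -
    have "(\<lambda>\<omega>. (F \<omega> - G \<omega>) $$ (i,j)) = (\<lambda>\<omega>. F \<omega> $$ (i,j) - G \<omega> $$ (i,j))" using that by (intro ext) (simp add: d)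
    also have "\<dots> \<in> borel_measurable P" by (intro borel_measurable_diff mm_ent[OF F] mm_ent[OF G] that)
    finally show ?thesis .
  qed
  then show ?thesis unfolding mat_meas_def using d by auto
qed

lemma mm_smult: assumes F: "mat_meas P n m F" shows "mat_meas P n m (\<lambda>\<omega>. c \<cdot>\<^sub>m F \<omega>)"
proof -
  have d: "dim_row (F \<omega>) = n" "dim_col (F \<omega>) = m" for \<omega> using mm_dims[OF F] by auto
  have "(\<lambda>\<omega>. (c \<cdot>\<^sub>m F \<omega>) $$ (i,j)) \<in> borel_measurable P" if "i < n" "j < m" for i j
  proof -
    have "(\<lambda>\<omega>. (c \<cdot>\<^sub>m F \<omega>) $$ (i,j)) = (\<lambda>\<omega>. c * F \<omega> $$ (i,j))" using that by (intro ext) (simp add: d)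
    also have "\<dots> \<in> borel_measurable P" by (intro borel_measurable_times borel_measurable_const mm_ent[OF F] that)
    finally show ?thesis .
  qed
  then show ?thesis unfolding mat_meas_def using d by auto
qed

lemma mm_const: "A \<in> carrier_mat n m \<Longrightarrow> mat_meas P n m (\<lambda>\<omega>. A)"
  unfolding mat_meas_def by auto

lemma mm_transpose: assumes F: "mat_meas P n m F" shows "mat_meas P m n (\<lambda>\<omega>. transpose_mat (F \<omega>))"
proof -
  have d: "dim_row (F \<omega>) = n" "dim_col (F \<omega>) = m" for \<omega> using mm_dims[OF F] by auto
  have "(\<lambda>\<omega>. transpose_mat (F \<omega>) $$ (i,j)) \<in> borel_measurable P" if "i < m" "j < n" for i j
  proof -
    have "(\<lambda>\<omega>. transpose_mat (F \<omega>) $$ (i,j)) = (\<lambda>\<omega>. F \<omega> $$ (j,i))" using that by (intro ext) (simp add: d)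
    also have "\<dots> \<in> borel_measurable P" by (intro mm_ent[OF F] that)
    finally show ?thesis .
  qed
  then show ?thesis unfolding mat_meas_def using d by auto
qed

lemma mm_mult: assumes "mat_meas P n k F" "mat_meas P k m G"
  shows "mat_meas P n m (\<lambda>\<omega>. F \<omega> * G \<omega>)"
proof -
  have c: "F \<omega> \<in> carrier_mat n k" "G \<omega> \<in> carrier_mat k m" for \<omega> using assms unfolding mat_meas_def by auto
  have d: "dim_row (F \<omega>) = n" "dim_col (F \<omega>) = k" "dim_row (G \<omega>) = k" "dim_col (G \<omega>) = m" for \<omega>
    using mm_dims[OF assms(1)] mm_dims[OF assms(2)] by auto
  have "(\<lambda>\<omega>. (F \<omega> * G \<omega>) $$ (i,j)) \<in> borel_measurable P" if "i < n" "j < m" for i j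
  proof -
    have "(\<lambda>\<omega>. (F \<omega> * G \<omega>) $$ (i,j)) = (\<lambda>\<omega>. \<Sum>l<k. F \<omega> $$ (i,l) * G \<omega> $$ (l,j))"
      using that by (intro ext) (simp add: mult_entry d del: index_mult_mat(1))
    also have "\<dots> \<in> borel_measurable P"
      using that by (intro borel_measurable_sum borel_measurable_times mm_ent[OF assms(1)] mm_ent[OF assms(2)]) auto
    finally show ?thesis .
  qed
  moreover have "F \<omega> * G \<omega> \<in> carrier_mat n m" for \<omega> using c[of \<omega>] by auto
  ultimately show ?thesis unfolding mat_meas_def by auto
qed

lemma mm_fro: assumes "mat_meas P n m F" shows "(\<lambda>\<omega>. fro_norm (F \<omega>)) \<in> borel_measurable P"
proof -
  have d: "dim_row (F \<omega>) = n" "dim_col (F \<omega>) = m" for \<omega> using mm_dims[OF assms] by auto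
  have "(\<lambda>\<omega>. fro_norm (F \<omega>)) = (\<lambda>\<omega>. sqrt (\<Sum>i<n. \<Sum>j<m. (F \<omega> $$ (i,j))\<^sup>2))"
    unfolding fro_norm_def by (intro ext) (simp add: d)
  also have "\<dots> \<in> borel_measurable P"
    by (intro measurable_compose[OF _ borel_measurable_sqrt] borel_measurable_sum borel_measurable_power mm_ent[OF assms]) auto
  finally show ?thesis .
qed

lemma mm_gd:
  assumes U: "mat_meas P d1 r U0" and V: "mat_meas P d2 r V0" and M: "M \<in> carrier_mat d1 d2"
  shows "mat_meas P d1 r (\<lambda>\<omega>. fst (mf_gd M r \<epsilon> (U0 \<omega>) (V0 \<omega>) t))
       \<and> mat_meas P d2 r (\<lambda>\<omega>. snd (mf_gd M r \<epsilon> (U0 \<omega>) (V0 \<omega>) t))"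
proof (induction t)
  case 0 then show ?case using U V by simp
next
  case (Suc t)
  let ?U = "\<lambda>\<omega>. fst (mf_gd M r \<epsilon> (U0 \<omega>) (V0 \<omega>) t)" and ?V = "\<lambda>\<omega>. snd (mf_gd M r \<epsilon> (U0 \<omega>) (V0 \<omega>) t)"
  have u: "mat_meas P d1 r ?U" and v: "mat_meas P d2 r ?V" using Suc by auto
  have R: "mat_meas P d1 d2 (\<lambda>\<omega>. ?U \<omega> * transpose_mat (?V \<omega>) - M)"
    by (intro mm_minus mm_mult[OF u] mm_transpose mm_const v M)
  have a: "mat_meas P d1 r (\<lambda>\<omega>. ?U \<omega> - mf_step M r \<epsilon> t \<cdot>\<^sub>m ((?U \<omega> * transpose_mat (?V \<omega>) - M) * ?V \<omega>))"
    by (intro mm_minus mm_smult mm_mult[OF R v] u)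
  have b: "mat_meas P d2 r (\<lambda>\<omega>. ?V \<omega> - mf_step M r \<epsilon> t \<cdot>\<^sub>m (transpose_mat (?U \<omega> * transpose_mat (?V \<omega>) - M) * ?U \<omega>))"
    by (intro mm_minus mm_smult mm_mult[OF mm_transpose[OF R] u] v)
  show ?case using a b by (simp only: gd_Suc fst_conv snd_conv)
qed

lemma mm_init:
  assumes "\<sigma> > 0"
  shows "mat_meas (gauss_init d1 d2 r \<sigma>) d1 r (init_U d1 r)" "mat_meas (gauss_init d1 d2 r \<sigma>) d2 r (init_V d2 r)"
proof -
  have "(\<lambda>\<omega>. init_U d1 r \<omega> $$ (i,j)) \<in> borel_measurable (gauss_init d1 d2 r \<sigma>)" if "i < d1" "j < r" for i j
  proof -
    have "(\<lambda>\<omega>. init_U d1 r \<omega> $$ (i,j)) = (\<lambda>\<omega>. \<omega> (Inl (i,j)))" using that unfolding init_U_def by auto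
    moreover have "Inl (i,j) \<in> init_index d1 d2 r" using that unfolding init_index_def by auto
    ultimately show ?thesis using comp_meas by metis
  qed
  then show "mat_meas (gauss_init d1 d2 r \<sigma>) d1 r (init_U d1 r)" unfolding mat_meas_def init_U_def by auto
  have "(\<lambda>\<omega>. init_V d2 r \<omega> $$ (i,j)) \<in> borel_measurable (gauss_init d1 d2 r \<sigma>)" if "i < d2" "j < r" for i j
  proof -
    have "(\<lambda>\<omega>. init_V d2 r \<omega> $$ (i,j)) = (\<lambda>\<omega>. \<omega> (Inr (i,j)))" using that unfolding init_V_def by auto
    moreover have "Inr (i,j) \<in> init_index d1 d2 r" using that unfolding init_index_def by auto
    ultimately show ?thesis using comp_meas by metis
  qed
  then show "mat_meas (gauss_init d1 d2 r \<sigma>) d2 r (init_V d2 r)" unfolding mat_meas_def init_V_def by auto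
qed


lemma init_sum:
  "(fro_norm (init_U d1 r \<omega>))\<^sup>2 + (fro_norm (init_V d2 r \<omega>))\<^sup>2 = (\<Sum>x\<in>init_index d1 d2 r. (\<omega> x)\<^sup>2)"
proof -
  have u: "(fro_norm (init_U d1 r \<omega>))\<^sup>2 = (\<Sum>p\<in>{..<d1} \<times> {..<r}. (\<omega> (Inl p))\<^sup>2)"
    unfolding fro_norm_def init_U_def by (simp add: sum_nonneg sum.cartesian_product case_prod_beta)
  have v: "(fro_norm (init_V d2 r \<omega>))\<^sup>2 = (\<Sum>p\<in>{..<d2} \<times> {..<r}. (\<omega> (Inr p))\<^sup>2)"
    unfolding fro_norm_def init_V_def by (simp add: sum_nonneg sum.cartesian_product case_prod_beta)
  have "(\<Sum>x\<in>init_index d1 d2 r. (\<omega> x)\<^sup>2)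
     = (\<Sum>x\<in>Inl ` ({..<d1} \<times> {..<r}). (\<omega> x)\<^sup>2) + (\<Sum>x\<in>Inr ` ({..<d2} \<times> {..<r}). (\<omega> x)\<^sup>2)"
    unfolding init_index_def by (rule sum.union_disjoint) auto
  also have "\<dots> = (\<Sum>p\<in>{..<d1} \<times> {..<r}. (\<omega> (Inl p))\<^sup>2) + (\<Sum>p\<in>{..<d2} \<times> {..<r}. (\<omega> (Inr p))\<^sup>2)"
    by (simp add: sum.reindex)
  finally show ?thesis using u v by simp
qed

lemma mm_obj: assumes "mat_meas P d1 r U" "mat_meas P d2 r V" "M \<in> carrier_mat d1 d2"
  shows "(\<lambda>\<omega>. mf_obj M (U \<omega>) (V \<omega>)) \<in> borel_measurable P"
proof -
  have "(\<lambda>\<omega>. fro_norm (U \<omega> * transpose_mat (V \<omega>) - M)) \<in> borel_measurable P"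
    by (rule mm_fro[OF mm_minus[OF mm_mult[OF assms(1) mm_transpose[OF assms(2)]] mm_const[OF assms(3)]]])
  then show ?thesis unfolding mf_obj_def by measurable
qed

lemma final:
  fixes M :: "real mat"
  assumes C: "C \<ge> 8" and k: "k \<ge> 3" and M: "M \<in> carrier_mat d1 d2" and rk: "r \<le> d2"
    and e: "0 < \<epsilon>" "\<epsilon> < fro_norm M"
    and d: "d = max d1 d2" and s: "\<sigma> = sqrt (\<epsilon> / (C * real d ^ k))"
  shows "prob_space (gauss_init d1 d2 r \<sigma>) \<and>
     measure (gauss_init d1 d2 r \<sigma>) {\<omega> \<in> space (gauss_init d1 d2 r \<sigma>).
       (\<forall>t. fro_norm (transpose_mat (fst (mf_gd M r \<epsilon> (init_U d1 r \<omega>) (init_V d2 r \<omega>) t)) * fst (mf_gd M r \<epsilon> (init_U d1 r \<omega>) (init_V d2 r \<omega>) t)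
                   - transpose_mat (snd (mf_gd M r \<epsilon> (init_U d1 r \<omega>) (init_V d2 r \<omega>) t)) * snd (mf_gd M r \<epsilon> (init_U d1 r \<omega>) (init_V d2 r \<omega>) t)) \<le> \<epsilon>)
     \<and> (\<forall>t. mf_obj M (fst (mf_gd M r \<epsilon> (init_U d1 r \<omega>) (init_V d2 r \<omega>) (Suc t))) (snd (mf_gd M r \<epsilon> (init_U d1 r \<omega>) (init_V d2 r \<omega>) (Suc t)))
            \<le> mf_obj M (fst (mf_gd M r \<epsilon> (init_U d1 r \<omega>) (init_V d2 r \<omega>) t)) (snd (mf_gd M r \<epsilon> (init_U d1 r \<omega>) (init_V d2 r \<omega>) t)))
     \<and> mf_obj M (fst (mf_gd M r \<epsilon> (init_U d1 r \<omega>) (init_V d2 r \<omega>) 0)) (snd (mf_gd M r \<epsilon> (init_U d1 r \<omega>) (init_V d2 r \<omega>) 0)) \<le> 2 * (fro_norm M)\<^sup>2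
     \<and> (\<forall>t. (fro_norm (fst (mf_gd M r \<epsilon> (init_U d1 r \<omega>) (init_V d2 r \<omega>) t)))\<^sup>2 \<le> 5 * sqrt (real r) * fro_norm M
         \<and> (fro_norm (snd (mf_gd M r \<epsilon> (init_U d1 r \<omega>) (init_V d2 r \<omega>) t)))\<^sup>2 \<le> 5 * sqrt (real r) * fro_norm M)}
     \<ge> 1 - 1 / real d"
    (is "?PS \<and> measure ?P ?E \<ge> _")
proof -
  have d1: "d1 > 0"
  proof (rule ccontr)
    assume "\<not> d1 > 0" then have "fro_norm M = 0" using M unfolding fro_norm_def by simp
    then show False using e by simp
  qed
  have d2: "d2 > 0"
  proof (rule ccontr)
    assume "\<not> d2 > 0" then have "fro_norm M = 0" using M unfolding fro_norm_def by simp
    then show False using e by simp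
  qed
  have d0: "real d \<ge> 1" using d d1 by simp
  have Cd: "C * real d ^ k > 0" using C d0 by simp
  have s0: "\<sigma> > 0" unfolding s using e Cd by simp
  have s2: "\<sigma>\<^sup>2 = \<epsilon> / (C * real d ^ k)" unfolding s using e Cd by simp
  interpret prob_space ?P by (rule prob_P[OF s0])
  let ?I = "init_index d1 d2 r"
  let ?G = "{\<omega> \<in> space ?P. (\<Sum>x\<in>?I. (\<omega> x)\<^sup>2) < \<epsilon> / 4}"
  have mG: "measure ?P ?G \<ge> 1 - real (card ?I) * \<sigma>\<^sup>2 / (\<epsilon> / 4)"
    by (rule markov_bound[OF s0]) (use e in simp)
  have bound: "real (card ?I) * \<sigma>\<^sup>2 / (\<epsilon> / 4) \<le> 1 / real d"
  proof -
    have "card ?I \<le> d1 * r + d2 * r" by (rule card_init_index)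
    also have "\<dots> \<le> d * d + d * d" using d rk by (intro add_mono mult_le_mono) auto
    finally have "real (card ?I) \<le> real (d * d + d * d)" by (simp only: of_nat_le_iff)
    then have cI: "real (card ?I) \<le> 2 * real d ^ 2" by (simp add: power2_eq_square)
    have "real d ^ 3 \<le> real d ^ k" using d0 k by (intro power_increasing) auto
    then have dk: "8 * real d ^ 3 \<le> C * real d ^ k" using C d0 by (intro mult_mono) auto
    have e4: "\<epsilon> / 4 > 0" using e by simp
    have "real (card ?I) * \<sigma>\<^sup>2 / (\<epsilon> / 4) = 4 * real (card ?I) / (C * real d ^ k)"
      unfolding s2 using e(1) Cd by (simp add: field_simps)
    also have "\<dots> \<le> 4 * (2 * real d ^ 2) / (8 * real d ^ 3)"
    proof (rule frac_le)
      show "0 \<le> 4 * (2 * real d ^ 2)" by simp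
      show "4 * real (card ?I) \<le> 4 * (2 * real d ^ 2)" using cI by simp
      show "0 < 8 * real d ^ 3" using d0 by simp
      show "8 * real d ^ 3 \<le> C * real d ^ k" by (rule dk)
    qed
    also have "\<dots> = 1 / real d"
    proof -
      have "real d \<noteq> 0" using d0 by simp
      then show ?thesis by (simp add: power2_eq_square power3_eq_cube)
    qed
    finally show ?thesis .
  qed
  have sub: "?G \<subseteq> ?E"
  proof
    fix \<omega> assume w: "\<omega> \<in> ?G"
    have U0: "init_U d1 r \<omega> \<in> carrier_mat d1 r" unfolding init_U_def by simp
    have V0: "init_V d2 r \<omega> \<in> carrier_mat d2 r" unfolding init_V_def by simp
    have i: "(fro_norm (init_U d1 r \<omega>))\<^sup>2 + (fro_norm (init_V d2 r \<omega>))\<^sup>2 \<le> \<epsilon> / 4"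
      using w init_sum[of d1 r \<omega> d2] by simp
    have "\<omega> \<in> space ?P" using w by (simp only: mem_Collect_eq)
    then show "\<omega> \<in> ?E" using det_main[OF M U0 V0 e i] by blast
  qed
  have mU: "mat_meas ?P d1 r (\<lambda>\<omega>. fst (mf_gd M r \<epsilon> (init_U d1 r \<omega>) (init_V d2 r \<omega>) t))"
    and mV: "mat_meas ?P d2 r (\<lambda>\<omega>. snd (mf_gd M r \<epsilon> (init_U d1 r \<omega>) (init_V d2 r \<omega>) t))" for t
    using mm_gd[OF mm_init[OF s0] M] by auto
  define FU where "FU = (\<lambda>\<omega> t. fst (mf_gd M r \<epsilon> (init_U d1 r \<omega>) (init_V d2 r \<omega>) t))"
  define FV where "FV = (\<lambda>\<omega> t. snd (mf_gd M r \<epsilon> (init_U d1 r \<omega>) (init_V d2 r \<omega>) t))"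
  have mU': "mat_meas ?P d1 r (\<lambda>\<omega>. FU \<omega> t)" and mV': "mat_meas ?P d2 r (\<lambda>\<omega>. FV \<omega> t)" for t
    unfolding FU_def FV_def by (rule mU, rule mV)
  have p1: "{\<omega> \<in> space ?P. \<forall>t. fro_norm (transpose_mat (FU \<omega> t) * FU \<omega> t - transpose_mat (FV \<omega> t) * FV \<omega> t) \<le> \<epsilon>} \<in> sets ?P"
  proof (rule sets.sets_Collect_countable_All)
    fix t
    have "(\<lambda>\<omega>. fro_norm (transpose_mat (FU \<omega> t) * FU \<omega> t - transpose_mat (FV \<omega> t) * FV \<omega> t)) \<in> borel_measurable ?P"
      by (rule mm_fro[OF mm_minus[OF mm_mult[OF mm_transpose[OF mU'] mU'] mm_mult[OF mm_transpose[OF mV'] mV']]])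
    then show "{\<omega> \<in> space ?P. fro_norm (transpose_mat (FU \<omega> t) * FU \<omega> t - transpose_mat (FV \<omega> t) * FV \<omega> t) \<le> \<epsilon>} \<in> sets ?P"
      by (rule borel_measurable_le) simp
  qed
  have p2: "{\<omega> \<in> space ?P. \<forall>t. mf_obj M (FU \<omega> (Suc t)) (FV \<omega> (Suc t)) \<le> mf_obj M (FU \<omega> t) (FV \<omega> t)} \<in> sets ?P"
  proof (rule sets.sets_Collect_countable_All)
    fix t
    show "{\<omega> \<in> space ?P. mf_obj M (FU \<omega> (Suc t)) (FV \<omega> (Suc t)) \<le> mf_obj M (FU \<omega> t) (FV \<omega> t)} \<in> sets ?P"
      by (rule borel_measurable_le[OF mm_obj[OF mU' mV' M] mm_obj[OF mU' mV' M]])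
  qed
  have p3: "{\<omega> \<in> space ?P. mf_obj M (FU \<omega> 0) (FV \<omega> 0) \<le> 2 * (fro_norm M)\<^sup>2} \<in> sets ?P"
    by (rule borel_measurable_le[OF mm_obj[OF mU' mV' M]]) simp
  have p4: "{\<omega> \<in> space ?P. \<forall>t. (fro_norm (FU \<omega> t))\<^sup>2 \<le> 5 * sqrt (real r) * fro_norm M
         \<and> (fro_norm (FV \<omega> t))\<^sup>2 \<le> 5 * sqrt (real r) * fro_norm M} \<in> sets ?P"
  proof (rule sets.sets_Collect_countable_All)
    fix t
    have a: "(\<lambda>\<omega>. (fro_norm (FU \<omega> t))\<^sup>2) \<in> borel_measurable ?P"
      by (intro borel_measurable_power mm_fro[OF mU'])
    have b: "(\<lambda>\<omega>. (fro_norm (FV \<omega> t))\<^sup>2) \<in> borel_measurable ?P"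
      by (intro borel_measurable_power mm_fro[OF mV'])
    show "{\<omega> \<in> space ?P. (fro_norm (FU \<omega> t))\<^sup>2 \<le> 5 * sqrt (real r) * fro_norm M
         \<and> (fro_norm (FV \<omega> t))\<^sup>2 \<le> 5 * sqrt (real r) * fro_norm M} \<in> sets ?P"
      by (rule sets.sets_Collect_conj; rule borel_measurable_le) (use a b in simp_all)
  qed
  have "{\<omega> \<in> space ?P. (\<forall>t. fro_norm (transpose_mat (FU \<omega> t) * FU \<omega> t - transpose_mat (FV \<omega> t) * FV \<omega> t) \<le> \<epsilon>)
      \<and> (\<forall>t. mf_obj M (FU \<omega> (Suc t)) (FV \<omega> (Suc t)) \<le> mf_obj M (FU \<omega> t) (FV \<omega> t))
      \<and> mf_obj M (FU \<omega> 0) (FV \<omega> 0) \<le> 2 * (fro_norm M)\<^sup>2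
      \<and> (\<forall>t. (fro_norm (FU \<omega> t))\<^sup>2 \<le> 5 * sqrt (real r) * fro_norm M
         \<and> (fro_norm (FV \<omega> t))\<^sup>2 \<le> 5 * sqrt (real r) * fro_norm M)} \<in> sets ?P"
    by (intro sets.sets_Collect_conj p1 p2 p3 p4)
  then have Ein: "?E \<in> sets ?P" unfolding FU_def FV_def .
  have "measure ?P ?G \<le> measure ?P ?E" by (rule finite_measure_mono[OF sub Ein])
  then have "measure ?P ?E \<ge> 1 - 1 / real d" using mG bound by linarith
  then show ?thesis using prob_P[OF s0] by blast
qed


theorem lemma3p1:
  "\<exists>C0 k0. C0 > 0 \<and>
    (\<forall>C k d1 d2 r (M :: real mat) \<epsilon>.
       C \<ge> C0 \<longrightarrow> k \<ge> k0 \<longrightarrow>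
       M \<in> carrier_mat d1 d2 \<longrightarrow> vec_space.rank d1 M = r \<longrightarrow>
       0 < \<epsilon> \<longrightarrow> \<epsilon> < fro_norm M \<longrightarrow>
       (let d = max d1 d2;
            \<sigma> = sqrt (\<epsilon> / (C * real d ^ k));
            P = gauss_init d1 d2 r \<sigma>;
            it = (\<lambda>\<omega> t. mf_gd M r \<epsilon> (init_U d1 r \<omega>) (init_V d2 r \<omega>) t)
        in prob_space P \<and>
           measure P {\<omega> \<in> space P.
              (\<forall>t. fro_norm (transpose_mat (fst (it \<omega> t)) * fst (it \<omega> t)
                              - transpose_mat (snd (it \<omega> t)) * snd (it \<omega> t)) \<le> \<epsilon>)
            \<and> (\<forall>t. mf_obj M (fst (it \<omega> (Suc t))) (snd (it \<omega> (Suc t)))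
                      \<le> mf_obj M (fst (it \<omega> t)) (snd (it \<omega> t)))
            \<and> mf_obj M (fst (it \<omega> 0)) (snd (it \<omega> 0)) \<le> 2 * (fro_norm M)\<^sup>2
            \<and> (\<forall>t. (fro_norm (fst (it \<omega> t)))\<^sup>2 \<le> 5 * sqrt (real r) * fro_norm M
                 \<and> (fro_norm (snd (it \<omega> t)))\<^sup>2 \<le> 5 * sqrt (real r) * fro_norm M)}
           \<ge> 1 - 1 / real d))"

proof (intro exI[of _ "8::real"] exI[of _ "3::nat"] conjI allI impI)
  show "(0::real) < 8" by simp
next
  fix C :: real and k d1 d2 r :: nat and M :: "real mat" and \<epsilon> :: real
  assume C: "C \<ge> 8" and k: "k \<ge> 3" and M: "M \<in> carrier_mat d1 d2" and rk: "vec_space.rank d1 M = r"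
    and e1: "0 < \<epsilon>" and e2: "\<epsilon> < fro_norm M"
  have r: "r \<le> d2" using vec_space.rank_le_nc[OF M] rk by simp
  show "let d = max d1 d2; \<sigma> = sqrt (\<epsilon> / (C * real d ^ k)); P = gauss_init d1 d2 r \<sigma>;
            it = (\<lambda>\<omega> t. mf_gd M r \<epsilon> (init_U d1 r \<omega>) (init_V d2 r \<omega>) t)
        in prob_space P \<and>
           measure P {\<omega> \<in> space P.
              (\<forall>t. fro_norm (transpose_mat (fst (it \<omega> t)) * fst (it \<omega> t)
                              - transpose_mat (snd (it \<omega> t)) * snd (it \<omega> t)) \<le> \<epsilon>)
            \<and> (\<forall>t. mf_obj M (fst (it \<omega> (Suc t))) (snd (it \<omega> (Suc t)))
                      \<le> mf_obj M (fst (it \<omega> t)) (snd (it \<omega> t)))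
            \<and> mf_obj M (fst (it \<omega> 0)) (snd (it \<omega> 0)) \<le> 2 * (fro_norm M)\<^sup>2
            \<and> (\<forall>t. (fro_norm (fst (it \<omega> t)))\<^sup>2 \<le> 5 * sqrt (real r) * fro_norm M
                 \<and> (fro_norm (snd (it \<omega> t)))\<^sup>2 \<le> 5 * sqrt (real r) * fro_norm M)}
           \<ge> 1 - 1 / real d"
    unfolding Let_def by (rule final[OF C k M r e1 e2 refl refl])
qed


end
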